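(* Let $f:\{0,1\}^n\to\mathbb{C}$ have affine support of dimension $r$ with free variables $x_1,\dots,x_r$, where on $\mathrm{supp}(f)$ each variable satisfies $x_i\equiv\sum_{j=1}^r a_{ij}x_j+b_i \pmod 2$ ($1\le i\le n$), with $a_{ij},b_i\in\{0,1\}$, $(a_{ij})_{1\le i,j\le r}=I_r$ and $b_1=\dots=b_r=0$. Suppose \[f=\lambda\cdot\chi_{\mathrm{supp}(f)}\cdot\alpha^{L(x)+2Q(x)+4H(x)},\] where $\lambda\ne0$, $\alpha=e^{\pi i/4}$, $L(x)=\sum_{j=1}^r c_jx_j$, $Q(x)=\sum_{1\le j<k\le r}c_{jk}x_jx_k$, and $H(x)=\sum_{S\subseteq[r],|S|\ge3}c_S\prod_{j\in S}x_j$, all $c$'s integers. Then $f\in\mathscr{L}$ if and only if $H$ is homogeneous of degree 3 (i.e. $c_S\equiv0\pmod 2$ whenever $|S|\ge 4$) and the following congruences hold over $\mathbb{Z}_2$: \[\sum_{i=1}^n\prod_{j\in S}a_{ij}\equiv0 \quad\text{for all } S\subseteq[r] \text{ with } 1\le|S|\le4,\] \[\sum_{i=1}^n\Big(\prod_{j\in S}a_{ij}\Big)b_i\equiv c_S \quad\text{for all } S\subseteq[r] \text{ with } 1\le|S|\le3,\] where $c_{\{j\}}=c_j$, $c_{\{j,k\}}=c_{jk}$, $c_{\{j,k,\ell\}}=c_{jk\ell}$.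
   Context: $\chi_{\mathrm{supp}(f)}$ is the 0-1 indicator of $\mathrm{supp}(f)=\{x:f(x)\ne0\}$. In the exponent of $\alpha$ the variables $x_j\in\{0,1\}$ are integers and the expression is evaluated in $\mathbb{Z}$ (equivalently mod 8); the coefficients $c_j$ (mod 8), $c_{jk}$ (mod 4), $c_S$ for $|S|\ge3$ (mod 2) are uniquely determined by $f$. The class $\mathscr{A}$: $g\in\mathscr{A}$ iff $\mathrm{supp}(g)$ is an affine subspace of $\mathbb{Z}_2^n$ and, for free variables $x_1,\dots,x_r$ of it, $g=\mu\, i^{L'(x_1,\dots,x_r)+2Q'(x_1,\dots,x_r)}$ on the support, with $\mu\neq0$, $L'$ linear with integer coefficients, $Q'$ multilinear with integer coefficients and all monomials of degree 2 (or $g\equiv0$). $f$ of arity $n$ belongs to $\mathscr{L}$ iff for every $\sigma=s_1\cdots s_n\in\mathrm{supp}(f)$ the function $x\mapsto\alpha^{\sum_i s_ix_i}f(x)$ (integer sum) belongs to $\mathscr{A}$. *)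

theory Defs
  imports Complex_Main
begin

text \<open>Boolean vectors of length n are modelled as functions nat \<Rightarrow> bool that are
  False outside the index range {1..n}.\<close>

definition cube :: "nat \<Rightarrow> (nat \<Rightarrow> bool) set" where
  "cube n = {x. \<forall>i. x i \<longrightarrow> i \<in> {1..n}}"

definition supp :: "nat \<Rightarrow> ((nat \<Rightarrow> bool) \<Rightarrow> complex) \<Rightarrow> (nat \<Rightarrow> bool) set" where
  "supp n f = {x \<in> cube n. f x \<noteq> 0}"

definition bxor :: "(nat \<Rightarrow> bool) \<Rightarrow> (nat \<Rightarrow> bool) \<Rightarrow> (nat \<Rightarrow> bool)" where
  "bxor x y = (\<lambda>i. x i \<noteq> y i)"

definition lin_sub :: "nat \<Rightarrow> (nat \<Rightarrow> bool) set \<Rightarrow> bool" where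
  "lin_sub n W \<longleftrightarrow> W \<subseteq> cube n \<and> (\<lambda>_. False) \<in> W \<and> (\<forall>x\<in>W. \<forall>y\<in>W. bxor x y \<in> W)"

definition affine_sub :: "nat \<Rightarrow> (nat \<Rightarrow> bool) set \<Rightarrow> bool" where
  "affine_sub n S \<longleftrightarrow> (\<exists>v \<in> cube n. \<exists>W. lin_sub n W \<and> S = bxor v ` W)"

definition free_vars :: "nat \<Rightarrow> (nat \<Rightarrow> bool) set \<Rightarrow> nat set \<Rightarrow> bool" where
  "free_vars n S J \<longleftrightarrow> J \<subseteq> {1..n} \<and>
     bij_betw (\<lambda>x i. i \<in> J \<and> x i) S {y. \<forall>i. y i \<longrightarrow> i \<in> J}"

definition bit :: "bool \<Rightarrow> int" where
  "bit b = (if b then 1 else 0)"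

definition alpha :: complex where
  "alpha = cis (pi / 4)"

definition in_A :: "nat \<Rightarrow> ((nat \<Rightarrow> bool) \<Rightarrow> complex) \<Rightarrow> bool" where
  "in_A n g \<longleftrightarrow> supp n g = {} \<or>
     (affine_sub n (supp n g) \<and>
      (\<exists>J. free_vars n (supp n g) J \<and>
        (\<exists>\<mu>::complex. \<mu> \<noteq> 0 \<and> (\<exists>(l::nat \<Rightarrow> int) (q::nat \<Rightarrow> nat \<Rightarrow> int).
          \<forall>x \<in> supp n g. g x = \<mu> * \<i> powi
             ((\<Sum>j\<in>J. l j * bit (x j))
              + 2 * (\<Sum>j\<in>J. \<Sum>k\<in>J. if j < k then q j k * bit (x j) * bit (x k) else 0))))))"

definition in_L :: "nat \<Rightarrow> ((nat \<Rightarrow> bool) \<Rightarrow> complex) \<Rightarrow> bool" where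
  "in_L n f \<longleftrightarrow> (\<forall>\<sigma> \<in> supp n f.
     in_A n (\<lambda>x. alpha powi (\<Sum>i=1..n. bit (\<sigma> i) * bit (x i)) * f x))"

end

theory Submission
  imports Defs
begin

lemma alpha_nz: "alpha \<noteq> 0" by (simp add: alpha_def)

lemma alpha_sq: "alpha ^ 2 = \<i>"
  unfolding alpha_def DeMoivre by simp

lemma alpha_pow8: "alpha ^ 8 = 1"
proof -
  have "alpha ^ 8 = cis (real 8 * (pi/4))" unfolding alpha_def DeMoivre by simp
  also have "real 8 * (pi/4) = 2 * pi" by simp
  finally show ?thesis by simp
qed

lemma i_powi: "\<i> powi k = alpha powi (2 * k)"
  by (simp add: power_int_mult flip: alpha_sq)

lemma alpha_powi_dvd: "8 dvd (d::int) \<Longrightarrow> alpha powi d = 1"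
proof -
  assume "8 dvd d" then obtain q where "d = 8 * q" by auto
  then have "alpha powi d = (alpha powi 8) powi q" by (simp add: power_int_mult)
  also have "alpha powi 8 = alpha ^ 8" by (metis power_int_of_nat of_nat_numeral)
  finally show ?thesis using alpha_pow8 by simp
qed

lemma alpha_powi_one: "alpha powi (d::int) = 1 \<Longrightarrow> 8 dvd d"
proof -
  assume h: "alpha powi d = 1"
  define \<rho> where "\<rho> = d mod 8"
  have r: "0 \<le> \<rho>" "\<rho> < 8" unfolding \<rho>_def by auto
  have "d = 8 * (d div 8) + \<rho>" unfolding \<rho>_def by simp
  then have "alpha powi d = alpha powi (8 * (d div 8)) * alpha powi \<rho>"
    by (metis alpha_nz power_int_add)
  also have "alpha powi (8 * (d div 8)) = 1" by (rule alpha_powi_dvd) simp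
  also have "alpha powi \<rho> = alpha ^ nat \<rho>" using r
    by (metis nonneg_int_cases nat_int power_int_of_nat)
  also have "\<dots> = cis (real (nat \<rho>) * (pi/4))" unfolding alpha_def DeMoivre ..
  finally have "cis (real (nat \<rho>) * (pi/4)) = 1" using h by simp
  then have "cos (real (nat \<rho>) * (pi/4)) = 1" by (metis cis.sel(1) one_complex.sel(1))
  then obtain m :: int where m: "real (nat \<rho>) * (pi/4) = real_of_int m * 2 * pi"
    using cos_one_2pi_int by metis
  then have "real (nat \<rho>) = 8 * m" by (simp add: field_simps)
  then have "\<rho> = 8 * m" using r by linarith
  with r have "\<rho> = 0" by presburger
  then show ?thesis unfolding \<rho>_def by auto
qed

lemma alpha_powi_eq: "alpha powi (m1::int) = alpha powi m2 \<longleftrightarrow> 8 dvd (m1 - m2)"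
proof
  assume "alpha powi m1 = alpha powi m2"
  then have "alpha powi (m1 - m2) = 1" using alpha_nz by (simp add: power_int_diff)
  then show "8 dvd (m1 - m2)" by (rule alpha_powi_one)
next
  assume "8 dvd (m1 - m2)"
  then have "alpha powi (m1 - m2) = 1" by (rule alpha_powi_dvd)
  then show "alpha powi m1 = alpha powi m2" using alpha_nz by (simp add: power_int_diff)
qed



lemma sum_pow_card: "finite B \<Longrightarrow> (\<Sum>T\<in>Pow B. (-2::int) ^ card T) = (-1) ^ card B"
proof (induction B rule: finite_induct)
  case empty then show ?case by simp
next
  case (insert a B)
  have disj: "Pow B \<inter> insert a ` Pow B = {}" using insert.hyps by auto
  have inj: "inj_on (insert a) (Pow B)"
  proof (rule inj_onI)
    fix X Y assume "X \<in> Pow B" "Y \<in> Pow B" "insert a X = insert a Y"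
    then have "a \<notin> X" "a \<notin> Y" using insert.hyps by auto
    then have "X = insert a X - {a}" "Y = insert a Y - {a}" by auto
    then show "X = Y" using \<open>insert a X = insert a Y\<close> by metis
  qed
  have "(\<Sum>T\<in>Pow (insert a B). (-2::int) ^ card T)
      = (\<Sum>T\<in>Pow B. (-2::int) ^ card T) + (\<Sum>T\<in>insert a ` Pow B. (-2::int) ^ card T)"
    unfolding Pow_insert using insert.hyps disj by (simp add: sum.union_disjoint)
  also have "(\<Sum>T\<in>insert a ` Pow B. (-2::int) ^ card T) = (\<Sum>T\<in>Pow B. (-2::int) ^ card (insert a T))"
    using inj by (simp add: sum.reindex)
  also have "\<dots> = (\<Sum>T\<in>Pow B. (-2) * (-2::int) ^ card T)"
  proof (rule sum.cong)
    fix T assume "T \<in> Pow B"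
    then have "finite T" "a \<notin> T" using insert.hyps finite_subset by auto
    then show "(-2::int) ^ card (insert a T) = (-2) * (-2) ^ card T" by simp
  qed simp
  finally show ?case using insert by (simp add: sum_distrib_left[symmetric] sum_negf)
qed

lemma bit_odd_card: "finite B \<Longrightarrow> bit (odd (card B)) = (\<Sum>T\<in>Pow B - {{}}. (-2::int) ^ (card T - 1))"
proof -
  assume fB: "finite B"
  have "(\<Sum>T\<in>Pow B. (-2::int) ^ card T) = 1 + (\<Sum>T\<in>Pow B - {{}}. (-2::int) ^ card T)"
    using fB by (simp add: sum.remove[of "Pow B" "{}"])
  also have "(\<Sum>T\<in>Pow B - {{}}. (-2::int) ^ card T) = (\<Sum>T\<in>Pow B - {{}}. (-2) * (-2::int) ^ (card T - 1))"
  proof (rule sum.cong)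
    fix T assume "T \<in> Pow B - {{}}"
    then have "finite T" "T \<noteq> {}" using fB finite_subset by auto
    then have "card T \<noteq> 0" by simp
    then show "(-2::int) ^ card T = (-2) * (-2) ^ (card T - 1)"
      by (metis Suc_pred' gr0I power_Suc)
  qed simp
  finally have "(-1::int) ^ card B = 1 - 2 * (\<Sum>T\<in>Pow B - {{}}. (-2::int) ^ (card T - 1))"
    using sum_pow_card[OF fB] by (simp add: sum_distrib_left[symmetric] sum_negf)
  then show ?thesis unfolding bit_def
    by (cases "odd (card B)") (auto simp: power_minus_odd)
qed


lemma uniq:
  fixes d :: "nat set \<Rightarrow> int"
  assumes fR: "finite R"
    and h: "\<And>Y. Y \<subseteq> R \<Longrightarrow> m dvd (\<Sum>T\<in>Pow Y - {{}}. d T)"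
  shows "T \<subseteq> R \<Longrightarrow> T \<noteq> {} \<Longrightarrow> m dvd d T"
proof (induction "card T" arbitrary: T rule: less_induct)
  case (less T)
  have fT: "finite T" using less.prems fR finite_subset by auto
  have "(\<Sum>T'\<in>Pow T - {{}}. d T') = d T + (\<Sum>T'\<in>Pow T - {{}} - {T}. d T')"
    using fT less.prems by (simp add: sum.remove[of "Pow T - {{}}" T])
  moreover have "m dvd (\<Sum>T'\<in>Pow T - {{}} - {T}. d T')"
  proof (rule dvd_sum)
    fix T' assume T': "T' \<in> Pow T - {{}} - {T}"
    then have "T' \<subset> T" by auto
    then have "card T' < card T" using fT by (simp add: psubset_card_mono)
    then show "m dvd d T'" using less.hyps T' less.prems by auto
  qed
  moreover have "m dvd (\<Sum>T'\<in>Pow T - {{}}. d T')" using h less.prems by simp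
  ultimately show ?case by (metis dvd_add_left_iff)
qed


lemma reindex1:
  "finite Y \<Longrightarrow> (\<Sum>T\<in>{T\<in>Pow Y. card T = 1}. h T) = (\<Sum>j\<in>Y. h {j})"
proof -
  assume fY: "finite Y"
  have "{T\<in>Pow Y. card T = 1} = (\<lambda>j. {j}) ` Y" by (auto simp: card_1_singleton_iff)
  moreover have "inj_on (\<lambda>j. {j}) Y" by auto
  ultimately show ?thesis by (simp add: sum.reindex)
qed

lemma reindex2:
  fixes Y :: "nat set"
  assumes fY: "finite Y"
  shows "(\<Sum>T\<in>{T\<in>Pow Y. card T = 2}. h T) = (\<Sum>j\<in>Y. \<Sum>k\<in>Y. if j < k then h {j,k} else 0)"
proof -
  let ?P = "{p\<in>Y \<times> Y. fst p < snd p}"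
  have "(\<Sum>j\<in>Y. \<Sum>k\<in>Y. if j < k then h {j,k} else 0) = (\<Sum>p\<in>Y \<times> Y. if fst p < snd p then h {fst p, snd p} else 0)"
    by (simp add: sum.cartesian_product case_prod_beta)
  also have "\<dots> = (\<Sum>p\<in>?P. h {fst p, snd p})"
    using fY by (simp add: sum.inter_filter)
  also have "\<dots> = (\<Sum>T\<in>{T\<in>Pow Y. card T = 2}. h T)"
  proof -
    have inj: "inj_on (\<lambda>p. {fst p, snd p}) ?P"
    proof (rule inj_onI)
      fix p p' assume "p \<in> ?P" "p' \<in> ?P" and e: "{fst p, snd p} = {fst p', snd p'}"
      then have "fst p < snd p" "fst p' < snd p'" by auto
      then show "p = p'" using e by (cases p, cases p') (auto simp: doubleton_eq_iff)
    qed
    have im: "(\<lambda>p. {fst p, snd p}) ` ?P = {T\<in>Pow Y. card T = 2}"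
    proof
      show "(\<lambda>p. {fst p, snd p}) ` ?P \<subseteq> {T\<in>Pow Y. card T = 2}" by auto
      show "{T\<in>Pow Y. card T = 2} \<subseteq> (\<lambda>p. {fst p, snd p}) ` ?P"
      proof
        fix T assume T: "T \<in> {T\<in>Pow Y. card T = 2}"
        then obtain x y where xy: "T = {x,y}" "x \<noteq> y" by (auto simp: card_2_iff)
        show "T \<in> (\<lambda>p. {fst p, snd p}) ` ?P"
        proof (cases "x < y")
          case True
          then have "(x,y) \<in> ?P" using xy T by auto
          then show ?thesis by (rule image_eqI[rotated]) (simp add: xy)
        next
          case False
          then have "(y,x) \<in> ?P" using xy T by auto
          then show ?thesis by (rule image_eqI[rotated]) (simp add: xy insert_commute)
        qed
      qed
    qed
    show ?thesis using sum.reindex[OF inj, of h] im by simp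
  qed
  finally show ?thesis ..
qed




locale th =
  fixes n r :: nat
    and f :: "(nat \<Rightarrow> bool) \<Rightarrow> complex"
    and a :: "nat \<Rightarrow> nat \<Rightarrow> int" and b :: "nat \<Rightarrow> int"
    and c :: "nat set \<Rightarrow> int"
    and lam :: complex
  assumes rn: "r \<le> n"
    and a01: "\<forall>i\<in>{1..n}. \<forall>j\<in>{1..r}. a i j \<in> {0, 1}"
    and b01: "\<forall>i\<in>{1..n}. b i \<in> {0, 1}"
    and aI: "\<forall>i\<in>{1..r}. \<forall>j\<in>{1..r}. a i j = (if i = j then 1 else 0)"
    and b0: "\<forall>i\<in>{1..r}. b i = 0"
    and supp_f: "supp n f = {x \<in> cube n. \<forall>i\<in>{1..n}.
                    x i = odd ((\<Sum>j=1..r. a i j * bit (x j)) + b i)}"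
    and lam: "lam \<noteq> 0"
    and f_form: "\<forall>x \<in> cube n. f x =
        (if x \<in> supp n f then
           lam * alpha powi
             ((\<Sum>j=1..r. c {j} * bit (x j))
              + 2 * (\<Sum>j=1..r. \<Sum>k=1..r. if j < k then c {j, k} * bit (x j) * bit (x k) else 0)
              + 4 * (\<Sum>S \<in> {S. S \<subseteq> {1..r} \<and> 3 \<le> card S}. c S * (\<Prod>j\<in>S. bit (x j))))
         else 0)"
begin

definition phi :: "nat set \<Rightarrow> nat \<Rightarrow> bool" where
  "phi Y = (\<lambda>i. i \<in> {1..n} \<and> odd ((\<Sum>j=1..r. a i j * bit (j \<in> Y)) + b i))"

definition E0 :: "(nat \<Rightarrow> bool) \<Rightarrow> int" where
  "E0 x = (\<Sum>j=1..r. c {j} * bit (x j))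
              + 2 * (\<Sum>j=1..r. \<Sum>k=1..r. if j < k then c {j, k} * bit (x j) * bit (x k) else 0)
              + 4 * (\<Sum>S \<in> {S. S \<subseteq> {1..r} \<and> 3 \<le> card S}. c S * (\<Prod>j\<in>S. bit (x j)))"

definition g :: "nat set \<Rightarrow> (nat \<Rightarrow> bool) \<Rightarrow> complex" where
  "g U = (\<lambda>x. alpha powi (\<Sum>i=1..n. bit (phi U i) * bit (x i)) * f x)"

definition EU :: "nat set \<Rightarrow> nat set \<Rightarrow> int" where
  "EU U Y = (\<Sum>i=1..n. bit (phi U i) * bit (phi Y i)) + E0 (phi Y)"

lemma phi_R:
  assumes Y: "Y \<subseteq> {1..r}" and j: "j \<in> {1..r}"
  shows "phi Y j = (j \<in> Y)"
proof -
  have "(\<Sum>k=1..r. a j k * bit (k \<in> Y)) = (\<Sum>k=1..r. if j = k then bit (k \<in> Y) else 0)"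
    using aI j by (intro sum.cong) auto
  also have "\<dots> = bit (j \<in> Y)" using j by simp
  finally show ?thesis using j b0 rn unfolding phi_def bit_def by auto
qed

lemma bit_phi_R: "Y \<subseteq> {1..r} \<Longrightarrow> j \<in> {1..r} \<Longrightarrow> bit (phi Y j) = bit (j \<in> Y)"
  using phi_R by simp

lemma phi_supp:
  assumes Y: "Y \<subseteq> {1..r}"
  shows "phi Y \<in> supp n f"
proof -
  have cube: "phi Y \<in> cube n" unfolding cube_def phi_def by auto
  have all: "\<forall>i\<in>{1..n}. phi Y i = odd ((\<Sum>j=1..r. a i j * bit (phi Y j)) + b i)"
  proof
    fix i assume i: "i \<in> {1..n}"
    have se: "(\<Sum>j=1..r. a i j * bit (phi Y j)) = (\<Sum>j=1..r. a i j * bit (j \<in> Y))"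
      using bit_phi_R[OF Y] by (intro sum.cong) auto
    have "phi Y i = odd ((\<Sum>j=1..r. a i j * bit (j \<in> Y)) + b i)"
      using i by (simp add: phi_def)
    then show "phi Y i = odd ((\<Sum>j=1..r. a i j * bit (phi Y j)) + b i)"
      by (simp only: se)
  qed
  show ?thesis unfolding supp_f mem_Collect_eq using cube all by (rule conjI)
qed

lemma supp_phi:
  assumes x: "x \<in> supp n f"
  shows "x = phi {j\<in>{1..r}. x j}"
proof
  fix i
  let ?Y = "{j\<in>{1..r}. x j}"
  have xc: "x \<in> cube n" and xe: "\<forall>i\<in>{1..n}. x i = odd ((\<Sum>j=1..r. a i j * bit (x j)) + b i)"
    using x unfolding supp_f by auto
  show "x i = phi ?Y i"
  proof (cases "i \<in> {1..n}")
    case True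
    have se: "(\<Sum>j=1..r. a i j * bit (x j)) = (\<Sum>j=1..r. a i j * bit (j \<in> ?Y))"
      by (intro sum.cong) auto
    have xi: "x i = odd ((\<Sum>j=1..r. a i j * bit (x j)) + b i)" using xe True by blast
    have "phi ?Y i = odd ((\<Sum>j=1..r. a i j * bit (j \<in> ?Y)) + b i)"
      using True by (simp add: phi_def)
    then show ?thesis using xi se by simp
  next
    case False
    have "\<not> x i" using xc False unfolding cube_def by blast
    moreover have "\<not> phi ?Y i" using False unfolding phi_def by blast
    ultimately show ?thesis by blast
  qed
qed

lemma supp_eq: "supp n f = phi ` Pow {1..r}"
proof
  show "supp n f \<subseteq> phi ` Pow {1..r}"
  proof
    fix x assume "x \<in> supp n f"
    then have "x = phi {j\<in>{1..r}. x j}" by (rule supp_phi)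
    then show "x \<in> phi ` Pow {1..r}" by blast
  qed
  show "phi ` Pow {1..r} \<subseteq> supp n f" using phi_supp by auto
qed

lemma phi_inj: "Y1 \<subseteq> {1..r} \<Longrightarrow> Y2 \<subseteq> {1..r} \<Longrightarrow> phi Y1 = phi Y2 \<Longrightarrow> Y1 = Y2"
proof -
  assume Y1: "Y1 \<subseteq> {1..r}" and Y2: "Y2 \<subseteq> {1..r}" and e: "phi Y1 = phi Y2"
  show "Y1 = Y2"
  proof (rule set_eqI)
    fix j show "j \<in> Y1 \<longleftrightarrow> j \<in> Y2"
    proof (cases "j \<in> {1..r}")
      case True
      then show ?thesis using phi_R[OF Y1 True] phi_R[OF Y2 True] e by simp
    next
      case False
      then show ?thesis using Y1 Y2 by blast
    qed
  qed
qed

lemma f_supp: "x \<in> supp n f \<Longrightarrow> f x = lam * alpha powi (E0 x)"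
proof -
  assume x: "x \<in> supp n f"
  then have "x \<in> cube n" unfolding supp_def by auto
  then have "f x = (if x \<in> supp n f then
           lam * alpha powi
             ((\<Sum>j=1..r. c {j} * bit (x j))
              + 2 * (\<Sum>j=1..r. \<Sum>k=1..r. if j < k then c {j, k} * bit (x j) * bit (x k) else 0)
              + 4 * (\<Sum>S \<in> {S. S \<subseteq> {1..r} \<and> 3 \<le> card S}. c S * (\<Prod>j\<in>S. bit (x j))))
         else 0)" using f_form by blast
  then show ?thesis using x unfolding E0_def by simp
qed

lemma supp_g: "supp n (g U) = supp n f"
  unfolding supp_def g_def using alpha_nz by auto

lemma g_phi: "Y \<subseteq> {1..r} \<Longrightarrow> g U (phi Y) = lam * alpha powi (EU U Y)"
proof -
  assume "Y \<subseteq> {1..r}"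
  then have "f (phi Y) = lam * alpha powi (E0 (phi Y))" using phi_supp f_supp by blast
  then show ?thesis unfolding g_def EU_def using alpha_nz by (simp add: power_int_add)
qed


end

context th begin
lemma affine: "affine_sub n (supp n f)"
proof -
  define psi where "psi Y = (\<lambda>i. i \<in> {1..n} \<and> odd (\<Sum>j=1..r. a i j * bit (j \<in> Y)))" for Y
  define W where "W = psi ` Pow {1..r}"
  have v: "phi {} \<in> cube n" using phi_supp[of "{}"] unfolding supp_def by auto
  have phi_psi: "phi Y = bxor (phi {}) (psi Y)" for Y
    unfolding phi_def psi_def bxor_def by (auto simp: bit_def)
  have xor_psi: "bxor (psi Y1) (psi Y2) = psi ((Y1 - Y2) \<union> (Y2 - Y1))" for Y1 Y2
  proof
    fix i
    let ?s1 = "\<Sum>j=1..r. a i j * bit (j \<in> Y1)"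
    let ?s2 = "\<Sum>j=1..r. a i j * bit (j \<in> Y2)"
    let ?s3 = "\<Sum>j=1..r. a i j * bit (j \<in> (Y1 - Y2) \<union> (Y2 - Y1))"
    have "?s1 + ?s2 - ?s3 = (\<Sum>j=1..r. a i j * bit (j \<in> Y1) + a i j * bit (j \<in> Y2) - a i j * bit (j \<in> (Y1 - Y2) \<union> (Y2 - Y1)))"
      by (simp add: sum.distrib sum_subtractf)
    also have "\<dots> = (\<Sum>j=1..r. 2 * (a i j * bit (j \<in> Y1 \<and> j \<in> Y2)))"
      by (rule sum.cong) (auto simp: bit_def)
    also have "\<dots> = 2 * (\<Sum>j=1..r. a i j * bit (j \<in> Y1 \<and> j \<in> Y2))" by (simp add: sum_distrib_left)
    finally obtain D where "?s1 + ?s2 - ?s3 = 2 * D" by blast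
    then have "?s3 = (?s1 + ?s2) + 2 * (- D)" by simp
    then have "odd ?s3 = odd (?s1 + ?s2)" by simp
    then show "bxor (psi Y1) (psi Y2) i = psi ((Y1 - Y2) \<union> (Y2 - Y1)) i"
      unfolding bxor_def psi_def by auto
  qed
  have lin: "lin_sub n W"
    unfolding lin_sub_def
  proof (intro conjI)
    show "W \<subseteq> cube n" unfolding W_def psi_def cube_def by auto
    have "psi {} = (\<lambda>_. False)" unfolding psi_def by (auto simp: bit_def)
    then show "(\<lambda>_. False) \<in> W" unfolding W_def by (intro image_eqI[where x="{}"]) auto
    show "\<forall>x\<in>W. \<forall>y\<in>W. bxor x y \<in> W"
    proof (intro ballI)
      fix x y assume "x \<in> W" "y \<in> W"
      then obtain Y1 Y2 where "Y1 \<subseteq> {1..r}" "Y2 \<subseteq> {1..r}" "x = psi Y1" "y = psi Y2"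
        unfolding W_def by blast
      moreover have "(Y1 - Y2) \<union> (Y2 - Y1) \<in> Pow {1..r}" using calculation by auto
      ultimately show "bxor x y \<in> W" unfolding W_def using xor_psi by (intro image_eqI[where x="(Y1 - Y2) \<union> (Y2 - Y1)"]) auto
    qed
  qed
  have "phi ` Pow {1..r} = (\<lambda>Y. bxor (phi {}) (psi Y)) ` Pow {1..r}"
    by (rule image_cong[OF refl phi_psi])
  then have eqW: "supp n f = bxor (phi {}) ` W" unfolding supp_eq W_def by (simp add: image_image)
  show ?thesis unfolding affine_sub_def
  proof (rule bexI[OF _ v])
    show "\<exists>W. lin_sub n W \<and> supp n f = bxor (phi {}) ` W" using lin eqW by blast
  qed
qed


end

context th begin
lemma freev: "free_vars n (supp n f) {1..r}"
  unfolding free_vars_def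
proof
  show "{1..r} \<subseteq> {1..n}" using rn by auto
  let ?p = "\<lambda>x i. i \<in> {1..r} \<and> x i"
  have pphi: "?p (phi Y) = (\<lambda>i. i \<in> Y)" if "Y \<subseteq> {1..r}" for Y
  proof (rule ext)
    fix i show "(i \<in> {1..r} \<and> phi Y i) = (i \<in> Y)"
    proof (cases "i \<in> {1..r}")
      case True then show ?thesis using phi_R[OF that True] by simp
    next
      case False then show ?thesis using that by blast
    qed
  qed
  show "bij_betw ?p (supp n f) {y. \<forall>i. y i \<longrightarrow> i \<in> {1..r}}"
  proof (rule bij_betw_imageI)
    show "inj_on ?p (supp n f)"
    proof (rule inj_onI)
      fix x1 x2 assume x1: "x1 \<in> supp n f" and x2: "x2 \<in> supp n f" and e: "?p x1 = ?p x2"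
      have "(j \<in> {1..r} \<and> x1 j) = (j \<in> {1..r} \<and> x2 j)" for j using fun_cong[OF e, of j] by simp
      then have eq: "{j\<in>{1..r}. x1 j} = {j\<in>{1..r}. x2 j}" by blast
      have "x1 = phi {j\<in>{1..r}. x1 j}" by (rule supp_phi[OF x1])
      also have "\<dots> = phi {j\<in>{1..r}. x2 j}" using eq by simp
      also have "\<dots> = x2" by (rule supp_phi[OF x2, symmetric])
      finally show "x1 = x2" .
    qed
    show "?p ` supp n f = {y. \<forall>i. y i \<longrightarrow> i \<in> {1..r}}"
    proof
      show "?p ` supp n f \<subseteq> {y. \<forall>i. y i \<longrightarrow> i \<in> {1..r}}" by auto
      show "{y. \<forall>i. y i \<longrightarrow> i \<in> {1..r}} \<subseteq> ?p ` supp n f"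
      proof
        fix y assume y: "y \<in> {y. \<forall>i. y i \<longrightarrow> i \<in> {1..r}}"
        let ?Y = "{i. y i}"
        have Y: "?Y \<subseteq> {1..r}" using y by auto
        have "y = ?p (phi ?Y)" using pphi[OF Y] by auto
        then show "y \<in> ?p ` supp n f" using phi_supp[OF Y] by blast
      qed
    qed
  qed
qed

end

definition Hf :: "(nat \<Rightarrow> int) \<Rightarrow> (nat \<Rightarrow> nat \<Rightarrow> int) \<Rightarrow> (nat set \<Rightarrow> int) \<Rightarrow> nat set \<Rightarrow> int" where
  "Hf l q m T = (if card T = 1 then l (the_elem T) else if card T = 2 then q (Min T) (Max T) else m T)"

lemma sumY:
  fixes r :: nat and Y :: "nat set"
  assumes "Y \<subseteq> {1..r}"
  shows "(\<Sum>j=1..r. h j * bit (j \<in> Y)) = (\<Sum>j\<in>Y. h j)"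
proof -
  have "(\<Sum>j=1..r. h j * bit (j \<in> Y)) = (\<Sum>j=1..r. if j \<in> Y then h j else 0)"
    by (rule sum.cong) (auto simp: bit_def)
  also have "\<dots> = (\<Sum>j\<in>{1..r} \<inter> Y. h j)" by (rule sum.inter_restrict[symmetric]) simp
  also have "{1..r} \<inter> Y = Y" using assms by blast
  finally show ?thesis .
qed

lemma prod_bit:
  assumes "finite S"
  shows "(\<Prod>j\<in>S. bit (j \<in> Y)) = bit (S \<subseteq> Y)"
proof (cases "S \<subseteq> Y")
  case True
  then have "(\<Prod>j\<in>S. bit (j \<in> Y)) = (\<Prod>j\<in>S. 1)" by (intro prod.cong) (auto simp: bit_def)
  then show ?thesis using True by (simp add: bit_def)
next
  case False
  then obtain j where "j \<in> S" "j \<notin> Y" by blast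
  then have "(\<Prod>j\<in>S. bit (j \<in> Y)) = 0" using assms by (intro prod_zero) (auto simp: bit_def)
  then show ?thesis using False by (simp add: bit_def)
qed

lemma gen_rep:
  fixes Y :: "nat set" and l :: "nat \<Rightarrow> int" and q :: "nat \<Rightarrow> nat \<Rightarrow> int" and m :: "nat set \<Rightarrow> int"
  assumes Y: "Y \<subseteq> {1..r}"
  shows "(\<Sum>j=1..r. l j * bit (j \<in> Y))
       + (\<Sum>j=1..r. \<Sum>k=1..r. if j < k then q j k * bit (j \<in> Y) * bit (k \<in> Y) else 0)
       + (\<Sum>S\<in>{S. S \<subseteq> {1..r} \<and> 3 \<le> card S}. m S * (\<Prod>j\<in>S. bit (j \<in> Y)))
       = (\<Sum>T\<in>Pow Y - {{}}. Hf l q m T)"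
proof -
  have fY: "finite Y" using Y finite_subset by blast
  define C1 where "C1 = {T\<in>Pow Y. card T = 1}"
  define C2 where "C2 = {T\<in>Pow Y. card T = 2}"
  define C3 where "C3 = {T\<in>Pow Y. 3 \<le> card T}"
  have fin: "finite C1" "finite C2" "finite C3" using fY unfolding C1_def C2_def C3_def by auto
  have part: "Pow Y - {{}} = C1 \<union> (C2 \<union> C3)"
  proof
    show "Pow Y - {{}} \<subseteq> C1 \<union> (C2 \<union> C3)"
    proof
      fix T assume T: "T \<in> Pow Y - {{}}"
      then have "finite T" "T \<noteq> {}" using fY finite_subset by auto
      then have "card T \<noteq> 0" by simp
      then have "card T = 1 \<or> card T = 2 \<or> 3 \<le> card T" by linarith
      then show "T \<in> C1 \<union> (C2 \<union> C3)" using T unfolding C1_def C2_def C3_def by auto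
    qed
    show "C1 \<union> (C2 \<union> C3) \<subseteq> Pow Y - {{}}" unfolding C1_def C2_def C3_def by auto
  qed
  have d1: "C1 \<inter> (C2 \<union> C3) = {}" unfolding C1_def C2_def C3_def by auto
  have d2: "C2 \<inter> C3 = {}" unfolding C2_def C3_def by auto
  have "(\<Sum>T\<in>Pow Y - {{}}. Hf l q m T) = (\<Sum>T\<in>C1. Hf l q m T) + ((\<Sum>T\<in>C2. Hf l q m T) + (\<Sum>T\<in>C3. Hf l q m T))"
    unfolding part using fin d1 d2 by (simp add: sum.union_disjoint)
  also have "(\<Sum>T\<in>C1. Hf l q m T) = (\<Sum>j=1..r. l j * bit (j \<in> Y))"
  proof -
    have "(\<Sum>T\<in>C1. Hf l q m T) = (\<Sum>T\<in>C1. l (the_elem T))"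
      unfolding C1_def Hf_def by (rule sum.cong) auto
    also have "\<dots> = (\<Sum>j\<in>Y. l (the_elem {j}))" unfolding C1_def by (rule reindex1[OF fY])
    also have "\<dots> = (\<Sum>j\<in>Y. l j)" by simp
    finally show ?thesis using sumY[OF Y] by simp
  qed
  also have "(\<Sum>T\<in>C2. Hf l q m T) = (\<Sum>j=1..r. \<Sum>k=1..r. if j < k then q j k * bit (j \<in> Y) * bit (k \<in> Y) else 0)"
  proof -
    have "(\<Sum>T\<in>C2. Hf l q m T) = (\<Sum>T\<in>C2. q (Min T) (Max T))"
      unfolding C2_def Hf_def by (rule sum.cong) auto
    also have "\<dots> = (\<Sum>j\<in>Y. \<Sum>k\<in>Y. if j < k then q (Min {j,k}) (Max {j,k}) else 0)"
      unfolding C2_def by (rule reindex2[OF fY])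
    also have "\<dots> = (\<Sum>j\<in>Y. \<Sum>k\<in>Y. if j < k then q j k else 0)"
      by (intro sum.cong refl) auto
    also have "\<dots> = (\<Sum>j=1..r. \<Sum>k=1..r. if j < k then q j k * bit (j \<in> Y) * bit (k \<in> Y) else 0)"
    proof -
      have inner: "(\<Sum>k=1..r. if j < k then q j k * bit (j \<in> Y) * bit (k \<in> Y) else 0)
          = (\<Sum>k\<in>Y. if j < k then q j k else 0) * bit (j \<in> Y)" for j
      proof -
        have "(\<Sum>k=1..r. if j < k then q j k * bit (j \<in> Y) * bit (k \<in> Y) else 0)
            = (\<Sum>k=1..r. ((if j < k then q j k else 0) * bit (j \<in> Y)) * bit (k \<in> Y))"
          by (rule sum.cong) auto
        also have "\<dots> = (\<Sum>k\<in>Y. (if j < k then q j k else 0) * bit (j \<in> Y))" by (rule sumY[OF Y])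
        also have "\<dots> = (\<Sum>k\<in>Y. if j < k then q j k else 0) * bit (j \<in> Y)" by (simp add: sum_distrib_right)
        finally show ?thesis .
      qed
      have "(\<Sum>j=1..r. \<Sum>k=1..r. if j < k then q j k * bit (j \<in> Y) * bit (k \<in> Y) else 0)
          = (\<Sum>j=1..r. (\<Sum>k\<in>Y. if j < k then q j k else 0) * bit (j \<in> Y))"
        using inner by simp
      also have "\<dots> = (\<Sum>j\<in>Y. \<Sum>k\<in>Y. if j < k then q j k else 0)" by (rule sumY[OF Y])
      finally show ?thesis by simp
    qed
    finally show ?thesis .
  qed
  also have "(\<Sum>T\<in>C3. Hf l q m T) = (\<Sum>S\<in>{S. S \<subseteq> {1..r} \<and> 3 \<le> card S}. m S * (\<Prod>j\<in>S. bit (j \<in> Y)))"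
  proof -
    have fS: "finite {S. S \<subseteq> {1..r} \<and> 3 \<le> card S}" by auto
    have "(\<Sum>S\<in>{S. S \<subseteq> {1..r} \<and> 3 \<le> card S}. m S * (\<Prod>j\<in>S. bit (j \<in> Y)))
        = (\<Sum>S\<in>{S. S \<subseteq> {1..r} \<and> 3 \<le> card S}. if S \<subseteq> Y then m S else 0)"
    proof (rule sum.cong)
      fix S assume "S \<in> {S. S \<subseteq> {1..r} \<and> 3 \<le> card S}"
      then have "finite S" using finite_subset by auto
      then show "m S * (\<Prod>j\<in>S. bit (j \<in> Y)) = (if S \<subseteq> Y then m S else 0)"
        by (simp only: prod_bit) (simp add: bit_def)
    qed simp
    also have "\<dots> = (\<Sum>S\<in>{S. S \<subseteq> {1..r} \<and> 3 \<le> card S} \<inter> {S. S \<subseteq> Y}. m S)"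
      using sum.inter_restrict[OF fS, of m "{S. S \<subseteq> Y}"] by simp
    also have "{S. S \<subseteq> {1..r} \<and> 3 \<le> card S} \<inter> {S. S \<subseteq> Y} = C3"
      unfolding C3_def using Y by auto
    also have "(\<Sum>S\<in>C3. m S) = (\<Sum>T\<in>C3. Hf l q m T)"
      unfolding C3_def Hf_def by (rule sum.cong) auto
    finally show ?thesis by simp
  qed
  finally show ?thesis by simp
qed

definition wt :: "nat \<Rightarrow> int" where
  "wt k = (if k = 1 then 1 else if k = 2 then 2 else 4)"

lemma bit_odd_add:
  assumes "bb \<in> {0, 1}"
  shows "bit (odd (int k + bb)) = bb + (1 - 2 * bb) * bit (odd k)"
  using assms by (auto simp: bit_def)

context th begin

definition eU :: "nat set \<Rightarrow> nat set \<Rightarrow> int" where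
  "eU U T = (\<Sum>i=1..n. bit (phi U i) * (1 - 2 * b i) * (\<Prod>j\<in>T. a i j)) * (-2) ^ (card T - 1)
            + wt (card T) * c T"

lemma prod_a:
  assumes i: "i \<in> {1..n}" and T: "T \<subseteq> {1..r}"
  shows "(\<Prod>j\<in>T. a i j) = bit (T \<subseteq> {j\<in>{1..r}. a i j = 1})"
proof -
  have fT: "finite T" using T finite_subset by blast
  have "(\<Prod>j\<in>T. a i j) = (\<Prod>j\<in>T. bit (j \<in> {j\<in>{1..r}. a i j = 1}))"
  proof (rule prod.cong)
    fix j assume "j \<in> T"
    then have "j \<in> {1..r}" using T by blast
    then have "a i j \<in> {0, 1}" using a01 i by blast
    then show "a i j = bit (j \<in> {j\<in>{1..r}. a i j = 1})" using \<open>j \<in> {1..r}\<close> by (auto simp: bit_def)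
  qed simp
  also have "\<dots> = bit (T \<subseteq> {j\<in>{1..r}. a i j = 1})" by (rule prod_bit[OF fT])
  finally show ?thesis .
qed

lemma bit_phi:
  assumes i: "i \<in> {1..n}" and Y: "Y \<subseteq> {1..r}"
  shows "bit (phi Y i) = b i + (1 - 2 * b i) * (\<Sum>T\<in>Pow Y - {{}}. (-2) ^ (card T - 1) * (\<Prod>j\<in>T. a i j))"
proof -
  define A where "A = {j\<in>{1..r}. a i j = 1}"
  have fY: "finite Y" using Y finite_subset by blast
  have "(\<Sum>j=1..r. a i j * bit (j \<in> Y)) = (\<Sum>j\<in>Y. a i j)" by (rule sumY[OF Y])
  also have "\<dots> = (\<Sum>j\<in>Y. if j \<in> A then 1 else 0)"
  proof (rule sum.cong)
    fix j assume "j \<in> Y"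
    then have "j \<in> {1..r}" using Y by blast
    then have "a i j \<in> {0, 1}" using a01 i by blast
    then show "a i j = (if j \<in> A then 1 else 0)" using \<open>j \<in> {1..r}\<close> unfolding A_def by auto
  qed simp
  also have "\<dots> = (\<Sum>j\<in>Y \<inter> A. 1)" by (rule sum.inter_restrict[OF fY, symmetric])
  also have "\<dots> = int (card (Y \<inter> A))" by simp
  finally have s1: "(\<Sum>j=1..r. a i j * bit (j \<in> Y)) = int (card (Y \<inter> A))" .
  have "phi Y i = odd (int (card (Y \<inter> A)) + b i)" using i s1 unfolding phi_def by simp
  then have "bit (phi Y i) = b i + (1 - 2 * b i) * bit (odd (card (Y \<inter> A)))"
    using bit_odd_add b01 i by simp
  also have "bit (odd (card (Y \<inter> A))) = (\<Sum>T\<in>Pow (Y \<inter> A) - {{}}. (-2::int) ^ (card T - 1))"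
    using fY by (simp add: bit_odd_card)
  also have "Pow (Y \<inter> A) - {{}} = {T \<in> Pow Y - {{}}. T \<subseteq> A}" by auto
  also have "(\<Sum>T\<in>{T \<in> Pow Y - {{}}. T \<subseteq> A}. (-2::int) ^ (card T - 1))
      = (\<Sum>T\<in>Pow Y - {{}}. if T \<subseteq> A then (-2::int) ^ (card T - 1) else 0)"
    by (rule sum.inter_filter) (use fY in simp)
  also have "\<dots> = (\<Sum>T\<in>Pow Y - {{}}. (-2) ^ (card T - 1) * (\<Prod>j\<in>T. a i j))"
  proof (rule sum.cong)
    fix T assume "T \<in> Pow Y - {{}}"
    then have "T \<subseteq> {1..r}" using Y by blast
    then show "(if T \<subseteq> A then (-2::int) ^ (card T - 1) else 0) = (-2) ^ (card T - 1) * (\<Prod>j\<in>T. a i j)"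
      using prod_a[OF i] unfolding A_def by (simp add: bit_def)
  qed simp
  finally show ?thesis .
qed

lemma minmax2: "card (T::nat set) = 2 \<Longrightarrow> {Min T, Max T} = T"
proof -
  assume "card T = 2"
  then obtain x y where xy: "T = {x,y}" "x \<noteq> y" by (auto simp: card_2_iff)
  then show ?thesis by (cases "x < y") (auto simp: min_def max_def)
qed

lemma E0_rep:
  assumes Y: "Y \<subseteq> {1..r}"
  shows "E0 (phi Y) = (\<Sum>T\<in>Pow Y - {{}}. wt (card T) * c T)"
proof -
  have e1: "(\<Sum>j=1..r. c {j} * bit (phi Y j)) = (\<Sum>j=1..r. c {j} * bit (j \<in> Y))"
    using bit_phi_R[OF Y] by (intro sum.cong) auto
  have e2: "2 * (\<Sum>j=1..r. \<Sum>k=1..r. if j < k then c {j, k} * bit (phi Y j) * bit (phi Y k) else 0)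
      = (\<Sum>j=1..r. \<Sum>k=1..r. if j < k then (2 * c {j, k}) * bit (j \<in> Y) * bit (k \<in> Y) else 0)"
    unfolding sum_distrib_left using bit_phi_R[OF Y] by (intro sum.cong refl) auto
  have e3: "4 * (\<Sum>S \<in> {S. S \<subseteq> {1..r} \<and> 3 \<le> card S}. c S * (\<Prod>j\<in>S. bit (phi Y j)))
      = (\<Sum>S \<in> {S. S \<subseteq> {1..r} \<and> 3 \<le> card S}. (4 * c S) * (\<Prod>j\<in>S. bit (j \<in> Y)))"
    unfolding sum_distrib_left
  proof (rule sum.cong)
    fix S assume S: "S \<in> {S. S \<subseteq> {1..r} \<and> 3 \<le> card S}"
    have "(\<Prod>j\<in>S. bit (phi Y j)) = (\<Prod>j\<in>S. bit (j \<in> Y))"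
      using bit_phi_R[OF Y] S by (intro prod.cong) auto
    then show "4 * (c S * (\<Prod>j\<in>S. bit (phi Y j))) = 4 * c S * (\<Prod>j\<in>S. bit (j \<in> Y))" by simp
  qed simp
  have "E0 (phi Y) = (\<Sum>T\<in>Pow Y - {{}}. Hf (\<lambda>j. c {j}) (\<lambda>j k. 2 * c {j, k}) (\<lambda>S. 4 * c S) T)"
    unfolding E0_def e1 e2 e3 by (rule gen_rep[OF Y])
  also have "\<dots> = (\<Sum>T\<in>Pow Y - {{}}. wt (card T) * c T)"
  proof (rule sum.cong)
    fix T assume T: "T \<in> Pow Y - {{}}"
    show "Hf (\<lambda>j. c {j}) (\<lambda>j k. 2 * c {j, k}) (\<lambda>S. 4 * c S) T = wt (card T) * c T"
    proof (cases "card T = 1")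
      case True
      then obtain x where "T = {x}" by (auto simp: card_1_singleton_iff)
      then show ?thesis unfolding Hf_def wt_def by simp
    next
      case False
      note F1 = False
      show ?thesis
      proof (cases "card T = 2")
        case True
        then show ?thesis using F1 minmax2[OF True] unfolding Hf_def wt_def by simp
      next
        case False
        then show ?thesis using F1 unfolding Hf_def wt_def by simp
      qed
    qed
  qed simp
  finally show ?thesis .
qed

lemma EU_rep:
  assumes U: "U \<subseteq> {1..r}" and Y: "Y \<subseteq> {1..r}"
  shows "EU U Y = (\<Sum>i=1..n. bit (phi U i) * b i) + (\<Sum>T\<in>Pow Y - {{}}. eU U T)"
proof -
  let ?s = "\<lambda>i. bit (phi U i)"
  let ?x = "\<lambda>i T. (-2::int) ^ (card T - 1) * (\<Prod>j\<in>T. a i j)"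
  have fP: "finite (Pow Y - {{}})" using Y finite_subset by blast
  have "(\<Sum>i=1..n. ?s i * bit (phi Y i)) = (\<Sum>i=1..n. ?s i * (b i + (1 - 2 * b i) * (\<Sum>T\<in>Pow Y - {{}}. ?x i T)))"
    using bit_phi[OF _ Y] by (intro sum.cong) auto
  also have "\<dots> = (\<Sum>i=1..n. ?s i * b i + (\<Sum>T\<in>Pow Y - {{}}. ?s i * (1 - 2 * b i) * ?x i T))"
    by (intro sum.cong refl) (simp add: sum_distrib_left algebra_simps)
  also have "\<dots> = (\<Sum>i=1..n. ?s i * b i) + (\<Sum>i=1..n. \<Sum>T\<in>Pow Y - {{}}. ?s i * (1 - 2 * b i) * ?x i T)"
    by (rule sum.distrib)
  also have "(\<Sum>i=1..n. \<Sum>T\<in>Pow Y - {{}}. ?s i * (1 - 2 * b i) * ?x i T)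
      = (\<Sum>T\<in>Pow Y - {{}}. \<Sum>i=1..n. ?s i * (1 - 2 * b i) * ?x i T)" by (rule sum.swap)
  also have "\<dots> = (\<Sum>T\<in>Pow Y - {{}}. (\<Sum>i=1..n. ?s i * (1 - 2 * b i) * (\<Prod>j\<in>T. a i j)) * (-2) ^ (card T - 1))"
  proof (rule sum.cong[OF refl])
    fix T
    show "(\<Sum>i=1..n. ?s i * (1 - 2 * b i) * ?x i T) = (\<Sum>i=1..n. ?s i * (1 - 2 * b i) * (\<Prod>j\<in>T. a i j)) * (-2) ^ (card T - 1)"
      unfolding sum_distrib_right by (rule sum.cong) (simp_all add: mult_ac)
  qed
  finally have p1: "(\<Sum>i=1..n. ?s i * bit (phi Y i)) = (\<Sum>i=1..n. ?s i * b i)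
      + (\<Sum>T\<in>Pow Y - {{}}. (\<Sum>i=1..n. ?s i * (1 - 2 * b i) * (\<Prod>j\<in>T. a i j)) * (-2) ^ (card T - 1))" .
  show ?thesis unfolding EU_def p1 E0_rep[OF Y] eU_def by (simp add: sum.distrib)
qed

end

lemma split_sq:
  fixes A :: "nat set" and f :: "nat \<Rightarrow> nat \<Rightarrow> int"
  assumes fA: "finite A"
  shows "(\<Sum>j\<in>A. \<Sum>k\<in>A. f j k) = (\<Sum>j\<in>A. f j j) + (\<Sum>j\<in>A. \<Sum>k\<in>A. if j < k then f j k + f k j else 0)"
proof -
  have "(\<Sum>j\<in>A. \<Sum>k\<in>A. f j k) = (\<Sum>j\<in>A. \<Sum>k\<in>A. (if j < k then f j k else 0) + (if j = k then f j k else 0) + (if k < j then f j k else 0))"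
    by (intro sum.cong refl) auto
  also have "\<dots> = (\<Sum>j\<in>A. \<Sum>k\<in>A. if j < k then f j k else 0) + (\<Sum>j\<in>A. \<Sum>k\<in>A. if j = k then f j k else 0) + (\<Sum>j\<in>A. \<Sum>k\<in>A. if k < j then f j k else 0)"
    by (simp add: sum.distrib)
  finally have 1: "(\<Sum>j\<in>A. \<Sum>k\<in>A. f j k) = (\<Sum>j\<in>A. \<Sum>k\<in>A. if j < k then f j k else 0) + (\<Sum>j\<in>A. \<Sum>k\<in>A. if j = k then f j k else 0) + (\<Sum>j\<in>A. \<Sum>k\<in>A. if k < j then f j k else 0)" .
  have 2: "(\<Sum>j\<in>A. \<Sum>k\<in>A. if j = k then f j k else 0) = (\<Sum>j\<in>A. f j j)"
    using fA by (intro sum.cong refl) (simp add: if_distrib cong: if_cong)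
  have 3: "(\<Sum>j\<in>A. \<Sum>k\<in>A. if k < j then f j k else 0) = (\<Sum>j\<in>A. \<Sum>k\<in>A. if j < k then f k j else 0)"
    by (rule sum.swap)
  have 4: "(\<Sum>j\<in>A. \<Sum>k\<in>A. if j < k then f j k + f k j else 0)
      = (\<Sum>j\<in>A. \<Sum>k\<in>A. if j < k then f j k else 0) + (\<Sum>j\<in>A. \<Sum>k\<in>A. if j < k then f k j else 0)"
    by (simp add: sum.distrib[symmetric] if_distrib cong: if_cong)
  show ?thesis unfolding 1 2 3 4 by simp
qed

lemma minmax_lt: "card (T::nat set) = 2 \<Longrightarrow> Min T < Max T"
proof -
  assume "card T = 2"
  then obtain x y where xy: "T = {x,y}" "x \<noteq> y" by (auto simp: card_2_iff)
  then show ?thesis by (cases "x < y") (auto simp: min_def max_def)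
qed

lemma bit_odd_cong: "2 dvd (bit (odd v) - v)"
  by (auto simp: bit_def)

lemma ar1: fixes x z w c :: int assumes "x = z - 2*w"
  shows "2 dvd (x + c) \<longleftrightarrow> 2 dvd (z + c)" using assms by presburger
lemma ar2: fixes x z w c :: int assumes "x = z - 2*w"
  shows "4 dvd (x * (-2) + 2 * c) \<longleftrightarrow> 2 dvd (z + c)" using assms by presburger
lemma ar3: fixes x z w c :: int assumes "x = z - 2*w"
  shows "8 dvd (x * 4 + 4 * c) \<longleftrightarrow> 2 dvd (z + c)" using assms by presburger
lemma ar4: fixes y c :: int
  shows "8 dvd (8 * y + 4 * c) \<longleftrightarrow> 2 dvd c" by presburger

definition md :: "nat \<Rightarrow> int" where
  "md k = (if k = 1 then 2 else if k = 2 then 4 else 8)"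

context th begin

definition P8 :: "(nat set \<Rightarrow> int) \<Rightarrow> bool" where
  "P8 F \<longleftrightarrow> (\<exists>c0 (l::nat\<Rightarrow>int) (q::nat\<Rightarrow>nat\<Rightarrow>int). \<forall>Y\<subseteq>{1..r}.
      8 dvd (F Y - (c0 + 2 * (\<Sum>j=1..r. l j * bit (j \<in> Y))
                       + 4 * (\<Sum>j=1..r. \<Sum>k=1..r. q j k * bit (j \<in> Y) * bit (k \<in> Y)))))"

lemma e_cond:
  assumes T: "T \<subseteq> {1..r}" "T \<noteq> {}"
  shows "md (card T) dvd eU U T \<longleftrightarrow>
    (if card T \<le> 3 then even ((\<Sum>i=1..n. bit (phi U i) * (\<Prod>j\<in>T. a i j)) + c T) else even (c T))"
proof -
  define X where "X = (\<Sum>i=1..n. bit (phi U i) * (1 - 2 * b i) * (\<Prod>j\<in>T. a i j))"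
  define Z where "Z = (\<Sum>i=1..n. bit (phi U i) * (\<Prod>j\<in>T. a i j))"
  define W where "W = (\<Sum>i=1..n. bit (phi U i) * b i * (\<Prod>j\<in>T. a i j))"
  have XZ: "X = Z - 2 * W" unfolding X_def Z_def W_def
    by (simp add: sum_distrib_left sum_subtractf[symmetric] algebra_simps)
  have eU: "eU U T = X * (-2) ^ (card T - 1) + wt (card T) * c T" unfolding eU_def X_def ..
  have "finite T" using T finite_subset by blast
  then have "card T \<noteq> 0" using T by simp
  then consider "card T = 1" | "card T = 2" | "card T = 3" | "4 \<le> card T" by linarith
  then show ?thesis
  proof cases
    case 1 then show ?thesis unfolding eU md_def wt_def Z_def[symmetric] using ar1[OF XZ] by simp
  next
    case 2 then show ?thesis unfolding eU md_def wt_def Z_def[symmetric] using ar2[OF XZ] by simp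
  next
    case 3 then show ?thesis unfolding eU md_def wt_def Z_def[symmetric] using ar3[OF XZ] by simp
  next
    case 4
    then obtain m where m: "card T = 4 + m" using le_Suc_ex by blast
    have "(-2::int) ^ (card T - 1) = (-2) ^ 3 * (-2) ^ (card T - 4)"
    proof -
      have "card T - 1 = 3 + (card T - 4)" using m by simp
      then show ?thesis by (simp only: power_add)
    qed
    then have "X * (-2) ^ (card T - 1) = 8 * (- (X * (-2) ^ (card T - 4)))" by simp
    then have e8: "eU U T = 8 * (- (X * (-2) ^ (card T - 4))) + 4 * c T" using 4 unfolding eU wt_def by simp
    have md8: "md (card T) = 8" using 4 by (simp add: md_def)
    have "8 dvd eU U T \<longleftrightarrow> even (c T)" unfolding e8 by (rule ar4)
    then show ?thesis using md8 4 by simp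
  qed
qed

lemma rhs_rep:
  assumes Y: "Y \<subseteq> {1..r}"
  shows "2 * (\<Sum>j=1..r. l j * bit (j \<in> Y)) + 4 * (\<Sum>j=1..r. \<Sum>k=1..r. q j k * bit (j \<in> Y) * bit (k \<in> Y))
     = (\<Sum>T\<in>Pow Y - {{}}. Hf (\<lambda>j. 2 * l j + 4 * q j j) (\<lambda>j k. 4 * (q j k + q k j)) (\<lambda>_. 0) T)"
proof -
  have bb: "bit P * bit P = bit P" for P by (simp add: bit_def)
  have "(\<Sum>j=1..r. \<Sum>k=1..r. q j k * bit (j \<in> Y) * bit (k \<in> Y))
      = (\<Sum>j=1..r. q j j * bit (j \<in> Y) * bit (j \<in> Y))
        + (\<Sum>j=1..r. \<Sum>k=1..r. if j < k then q j k * bit (j \<in> Y) * bit (k \<in> Y) + q k j * bit (k \<in> Y) * bit (j \<in> Y) else 0)"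
    by (rule split_sq) simp
  also have "(\<Sum>j=1..r. q j j * bit (j \<in> Y) * bit (j \<in> Y)) = (\<Sum>j=1..r. q j j * bit (j \<in> Y))"
    by (simp add: bb mult.assoc)
  also have "(\<Sum>j=1..r. \<Sum>k=1..r. if j < k then q j k * bit (j \<in> Y) * bit (k \<in> Y) + q k j * bit (k \<in> Y) * bit (j \<in> Y) else 0)
      = (\<Sum>j=1..r. \<Sum>k=1..r. if j < k then (q j k + q k j) * bit (j \<in> Y) * bit (k \<in> Y) else 0)"
    by (intro sum.cong refl) (simp add: algebra_simps)
  finally have e: "(\<Sum>j=1..r. \<Sum>k=1..r. q j k * bit (j \<in> Y) * bit (k \<in> Y)) = (\<Sum>j=1..r. q j j * bit (j \<in> Y)) + (\<Sum>j=1..r. \<Sum>k=1..r. if j < k then (q j k + q k j) * bit (j \<in> Y) * bit (k \<in> Y) else 0)" .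
  have "2 * (\<Sum>j=1..r. l j * bit (j \<in> Y)) + 4 * (\<Sum>j=1..r. \<Sum>k=1..r. q j k * bit (j \<in> Y) * bit (k \<in> Y))
     = (\<Sum>j=1..r. (2 * l j + 4 * q j j) * bit (j \<in> Y))
       + (\<Sum>j=1..r. \<Sum>k=1..r. if j < k then (4 * (q j k + q k j)) * bit (j \<in> Y) * bit (k \<in> Y) else 0)
       + (\<Sum>S\<in>{S. S \<subseteq> {1..r} \<and> 3 \<le> card S}. 0 * (\<Prod>j\<in>S. bit (j \<in> Y)))"
    unfolding e by (simp add: sum_distrib_left sum.distrib algebra_simps if_distrib cong: if_cong)
  also have "\<dots> = (\<Sum>T\<in>Pow Y - {{}}. Hf (\<lambda>j. 2 * l j + 4 * q j j) (\<lambda>j k. 4 * (q j k + q k j)) (\<lambda>_. 0) T)"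
    by (rule gen_rep[OF Y])
  finally show ?thesis .
qed

end

context th begin

lemma EU_minus:
  assumes U: "U \<subseteq> {1..r}" and Y: "Y \<subseteq> {1..r}"
  shows "EU U Y - (c0 + 2 * (\<Sum>j=1..r. l j * bit (j \<in> Y))
                       + 4 * (\<Sum>j=1..r. \<Sum>k=1..r. q j k * bit (j \<in> Y) * bit (k \<in> Y)))
    = ((\<Sum>i=1..n. bit (phi U i) * b i) - c0)
      + (\<Sum>T\<in>Pow Y - {{}}. eU U T - Hf (\<lambda>j. 2 * l j + 4 * q j j) (\<lambda>j k. 4 * (q j k + q k j)) (\<lambda>_. 0) T)"
proof -
  have "c0 + 2 * (\<Sum>j=1..r. l j * bit (j \<in> Y)) + 4 * (\<Sum>j=1..r. \<Sum>k=1..r. q j k * bit (j \<in> Y) * bit (k \<in> Y))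
      = c0 + (\<Sum>T\<in>Pow Y - {{}}. Hf (\<lambda>j. 2 * l j + 4 * q j j) (\<lambda>j k. 4 * (q j k + q k j)) (\<lambda>_. 0) T)"
    using rhs_rep[OF Y, of l q] by simp
  then show ?thesis unfolding EU_rep[OF U Y] by (simp add: sum_subtractf)
qed

lemma KB:
  assumes U: "U \<subseteq> {1..r}"
  shows "P8 (EU U) \<longleftrightarrow> (\<forall>T. T \<subseteq> {1..r} \<and> T \<noteq> {} \<longrightarrow> md (card T) dvd eU U T)"
proof
  assume "P8 (EU U)"
  then obtain c0 l q where h: "\<forall>Y\<subseteq>{1..r}. 8 dvd (EU U Y - (c0 + 2 * (\<Sum>j=1..r. l j * bit (j \<in> Y))
                       + 4 * (\<Sum>j=1..r. \<Sum>k=1..r. q j k * bit (j \<in> Y) * bit (k \<in> Y))))"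
    unfolding P8_def by blast
  define H where "H = Hf (\<lambda>j. 2 * l j + 4 * q j j) (\<lambda>j k. 4 * (q j k + q k j)) (\<lambda>_. 0)"
  define C where "C = (\<Sum>i=1..n. bit (phi U i) * b i)"
  have h2: "8 dvd ((C - c0) + (\<Sum>T\<in>Pow Y - {{}}. eU U T - H T))" if Y: "Y \<subseteq> {1..r}" for Y
  proof -
    have "8 dvd (EU U Y - (c0 + 2 * (\<Sum>j=1..r. l j * bit (j \<in> Y))
                       + 4 * (\<Sum>j=1..r. \<Sum>k=1..r. q j k * bit (j \<in> Y) * bit (k \<in> Y))))"
      using h Y by blast
    then show ?thesis by (simp only: EU_minus[OF U Y] H_def C_def)
  qed
  have "8 dvd (C - c0)" using h2[of "{}"] by simp
  then have h3: "8 dvd (\<Sum>T\<in>Pow Y - {{}}. eU U T - H T)" if "Y \<subseteq> {1..r}" for Y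
    using h2[OF that] by (simp add: dvd_add_right_iff)
  have h4: "8 dvd (eU U T - H T)" if "T \<subseteq> {1..r}" "T \<noteq> {}" for T
    by (rule uniq[of "{1..r}", OF _ h3 that]) simp_all
  show "\<forall>T. T \<subseteq> {1..r} \<and> T \<noteq> {} \<longrightarrow> md (card T) dvd eU U T"
  proof (intro allI impI)
    fix T assume T: "T \<subseteq> {1..r} \<and> T \<noteq> {}"
    then have d: "8 dvd (eU U T - H T)" using h4 by blast
    show "md (card T) dvd eU U T"
    proof (cases "card T = 1")
      case True
      then obtain x where x: "T = {x}" by (auto simp: card_1_singleton_iff)
      have "H T = 2 * (l x + 2 * q x x)" unfolding H_def Hf_def x by simp
      then have "2 dvd H T" by simp
      moreover have "2 dvd (eU U T - H T)" using d by (rule dvd_trans[rotated]) simp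
      ultimately have "2 dvd (eU U T - H T) + H T" by (intro dvd_add)
        then have "2 dvd eU U T" by simp
      then show ?thesis using True by (simp add: md_def)
    next
      case False
      note F1 = False
      show ?thesis
      proof (cases "card T = 2")
        case True
        have "H T = 4 * (q (Min T) (Max T) + q (Max T) (Min T))" unfolding H_def Hf_def using True by simp
        then have "4 dvd H T" by simp
        moreover have "4 dvd (eU U T - H T)" using d by (rule dvd_trans[rotated]) simp
        ultimately have "4 dvd (eU U T - H T) + H T" by (intro dvd_add)
        then have "4 dvd eU U T" by simp
        then show ?thesis using True by (simp add: md_def)
      next
        case False
        have "H T = 0" unfolding H_def Hf_def using F1 False by simp
        then show ?thesis using d F1 False by (simp add: md_def)
      qed
    qed
  qed
next
  assume hyp: "\<forall>T. T \<subseteq> {1..r} \<and> T \<noteq> {} \<longrightarrow> md (card T) dvd eU U T"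
  define C where "C = (\<Sum>i=1..n. bit (phi U i) * b i)"
  define l where "l j = eU U {j} div 2" for j
  define q where "q j k = (if j < k then eU U {j,k} div 4 else 0)" for j k
  define H where "H = Hf (\<lambda>j. 2 * l j + 4 * q j j) (\<lambda>j k. 4 * (q j k + q k j)) (\<lambda>_. 0)"
  have termw: "8 dvd (eU U T - H T)" if T: "T \<subseteq> {1..r}" "T \<noteq> {}" for T
  proof -
    have md: "md (card T) dvd eU U T" using hyp T by blast
    show ?thesis
    proof (cases "card T = 1")
      case True
      then obtain x where x: "T = {x}" by (auto simp: card_1_singleton_iff)
      have "2 dvd eU U {x}" using md True x by (simp add: md_def)
      then have "H T = eU U T" unfolding H_def Hf_def x l_def q_def by simp
      then show ?thesis by simp
    next
      case False
      note F1 = False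
      show ?thesis
      proof (cases "card T = 2")
        case True
        have lt: "Min T < Max T" by (rule minmax_lt[OF True])
        have "4 dvd eU U T" using md True by (simp add: md_def)
        then have "H T = eU U T" unfolding H_def Hf_def q_def using True lt minmax2[OF True] by simp
        then show ?thesis by simp
      next
        case False
        have "H T = 0" unfolding H_def Hf_def using F1 False by simp
        then show ?thesis using md F1 False by (simp add: md_def)
      qed
    qed
  qed
  show "P8 (EU U)" unfolding P8_def
  proof (intro exI allI impI)
    fix Y assume Y: "Y \<subseteq> {1..r}"
    have "8 dvd (\<Sum>T\<in>Pow Y - {{}}. eU U T - H T)"
    proof (rule dvd_sum)
      fix T assume "T \<in> Pow Y - {{}}"
      then have "T \<subseteq> {1..r}" "T \<noteq> {}" using Y by auto
      then show "8 dvd (eU U T - H T)" by (rule termw)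
    qed
    then have "8 dvd ((C - C) + (\<Sum>T\<in>Pow Y - {{}}. eU U T - H T))" by simp
    then show "8 dvd (EU U Y - (C + 2 * (\<Sum>j=1..r. l j * bit (j \<in> Y))
                       + 4 * (\<Sum>j=1..r. \<Sum>k=1..r. q j k * bit (j \<in> Y) * bit (k \<in> Y))))"
      by (simp only: EU_minus[OF U Y] H_def C_def)
  qed
qed

end


lemma dvd2_mod: fixes x y :: int shows "2 dvd (x + y) \<longleftrightarrow> x mod 2 = y mod 2" by presburger

lemma ar5: fixes z y c :: int shows "even (z + c) \<Longrightarrow> 2 dvd (z - y) \<Longrightarrow> even (y + c)" by presburger

lemma ar6: fixes x y z w :: int shows "even (x + w) \<Longrightarrow> 2 dvd (x - (y + z)) \<Longrightarrow> even (y + w) \<Longrightarrow> even z" by presburger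
lemma ar7: fixes x y z w :: int shows "2 dvd (x - (y + z)) \<Longrightarrow> even (y + w) \<Longrightarrow> even z \<Longrightarrow> even (x + w)" by presburger

context th begin

definition ZU :: "nat set \<Rightarrow> nat set \<Rightarrow> int" where
  "ZU U T = (\<Sum>i=1..n. bit (phi U i) * (\<Prod>j\<in>T. a i j))"

definition condU :: "nat set \<Rightarrow> bool" where
  "condU U \<longleftrightarrow> (\<forall>T. T \<subseteq> {1..r} \<and> T \<noteq> {} \<longrightarrow>
      (if card T \<le> 3 then even (ZU U T + c T) else even (c T)))"

lemma prod_ins:
  assumes i: "i \<in> {1..n}" and k: "k \<in> {1..r}" and T: "T \<subseteq> {1..r}"
  shows "a i k * (\<Prod>j\<in>T. a i j) = (\<Prod>j\<in>insert k T. a i j)"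
proof -
  have fT: "finite T" using T finite_subset by blast
  show ?thesis
  proof (cases "k \<in> T")
    case False then show ?thesis using fT by simp
  next
    case True
    have ak: "a i k \<in> {0, 1}" using a01 i k by blast
    have "(\<Prod>j\<in>T. a i j) = a i k * (\<Prod>j\<in>T - {k}. a i j)" using fT True by (simp add: prod.remove)
    then have "a i k * (\<Prod>j\<in>T. a i j) = (a i k * a i k) * (\<Prod>j\<in>T - {k}. a i j)" by simp
    also have "a i k * a i k = a i k" using ak by auto
    finally show ?thesis using True fT by (simp add: prod.remove insert_absorb)
  qed
qed

lemma ZU_cong:
  assumes U: "U \<subseteq> {1..r}" and T: "T \<subseteq> {1..r}"
  shows "2 dvd (ZU U T - ((\<Sum>i=1..n. (\<Prod>j\<in>T. a i j) * b i) + (\<Sum>k\<in>U. \<Sum>i=1..n. \<Prod>j\<in>insert k T. a i j)))"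
proof -
  define v where "v i = (\<Sum>k\<in>U. a i k) + b i" for i
  have sv: "2 dvd (bit (phi U i) - v i)" if i: "i \<in> {1..n}" for i
  proof -
    have "phi U i = odd ((\<Sum>j=1..r. a i j * bit (j \<in> U)) + b i)" using i unfolding phi_def by simp
    also have "(\<Sum>j=1..r. a i j * bit (j \<in> U)) = (\<Sum>k\<in>U. a i k)" by (rule sumY[OF U])
    finally have "phi U i = odd (v i)" unfolding v_def .
    then show ?thesis using bit_odd_cong[of "v i"] by simp
  qed
  have d1: "2 dvd (ZU U T - (\<Sum>i=1..n. v i * (\<Prod>j\<in>T. a i j)))"
  proof -
    have "ZU U T - (\<Sum>i=1..n. v i * (\<Prod>j\<in>T. a i j)) = (\<Sum>i=1..n. (bit (phi U i) - v i) * (\<Prod>j\<in>T. a i j))"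
      unfolding ZU_def by (simp add: sum_subtractf[symmetric] algebra_simps)
    also have "2 dvd \<dots>" using sv by (intro dvd_sum) simp
    finally show ?thesis .
  qed
  have "(\<Sum>i=1..n. v i * (\<Prod>j\<in>T. a i j)) = (\<Sum>i=1..n. (\<Prod>j\<in>T. a i j) * b i) + (\<Sum>i=1..n. \<Sum>k\<in>U. a i k * (\<Prod>j\<in>T. a i j))"
    unfolding v_def by (simp add: sum.distrib[symmetric] sum_distrib_right algebra_simps)
  also have "(\<Sum>i=1..n. \<Sum>k\<in>U. a i k * (\<Prod>j\<in>T. a i j)) = (\<Sum>i=1..n. \<Sum>k\<in>U. \<Prod>j\<in>insert k T. a i j)"
    using prod_ins T U by (intro sum.cong refl) blast
  also have "\<dots> = (\<Sum>k\<in>U. \<Sum>i=1..n. \<Prod>j\<in>insert k T. a i j)" by (rule sum.swap)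
  finally show ?thesis using d1 by simp
qed

lemma KC:
  "(\<forall>U. U \<subseteq> {1..r} \<longrightarrow> condU U) \<longleftrightarrow>
           (\<forall>S. S \<subseteq> {1..r} \<and> 4 \<le> card S \<longrightarrow> even (c S))
         \<and> (\<forall>S. S \<subseteq> {1..r} \<and> 1 \<le> card S \<and> card S \<le> 4 \<longrightarrow>
               even (\<Sum>i=1..n. \<Prod>j\<in>S. a i j))
         \<and> (\<forall>S. S \<subseteq> {1..r} \<and> 1 \<le> card S \<and> card S \<le> 3 \<longrightarrow>
               (\<Sum>i=1..n. (\<Prod>j\<in>S. a i j) * b i) mod 2 = c S mod 2)"
  (is "?L \<longleftrightarrow> ?A \<and> ?B \<and> ?C")
proof
  assume L: ?L
  have c0: "condU {}" using L by blast
  have Z0: "2 dvd (ZU {} T - (\<Sum>i=1..n. (\<Prod>j\<in>T. a i j) * b i))" if "T \<subseteq> {1..r}" for T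
    using ZU_cong[OF _ that, of "{}"] by simp
  have C0: "even ((\<Sum>i=1..n. (\<Prod>j\<in>T. a i j) * b i) + c T)"
    if T: "T \<subseteq> {1..r}" "1 \<le> card T" "card T \<le> 3" for T
  proof -
    have "T \<noteq> {}" using T by auto
    then have "if card T \<le> 3 then even (ZU {} T + c T) else even (c T)"
      using c0 T(1) unfolding condU_def by blast
    then have "even (ZU {} T + c T)" using T(3) by simp
    moreover have "2 dvd (ZU {} T - (\<Sum>i=1..n. (\<Prod>j\<in>T. a i j) * b i))" using Z0[OF T(1)] .
    ultimately show ?thesis
      by (rule ar5)
  qed
  show "?A \<and> ?B \<and> ?C"
  proof (intro conjI)
    show ?A
    proof (intro allI impI)
      fix S assume S: "S \<subseteq> {1..r} \<and> 4 \<le> card S"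
      then have "S \<noteq> {}" by auto
      then have "if card S \<le> 3 then even (ZU {} S + c S) else even (c S)"
        using c0 S unfolding condU_def by blast
      then show "even (c S)" using S by simp
    qed
    show ?C
    proof (intro allI impI)
      fix S assume S: "S \<subseteq> {1..r} \<and> 1 \<le> card S \<and> card S \<le> 3"
      then have "even ((\<Sum>i=1..n. (\<Prod>j\<in>S. a i j) * b i) + c S)" using C0 by blast
      then show "(\<Sum>i=1..n. (\<Prod>j\<in>S. a i j) * b i) mod 2 = c S mod 2" unfolding dvd2_mod .
    qed
    show ?B
    proof (intro allI impI)
      fix S assume S: "S \<subseteq> {1..r} \<and> 1 \<le> card S \<and> card S \<le> 4"
      then have fS: "finite S" "S \<noteq> {}" using finite_subset by auto
      then obtain k where k: "k \<in> S" by blast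
      define T where "T = (if card S = 1 then S else S - {k})"
      have T: "T \<subseteq> {1..r}" "1 \<le> card T" "card T \<le> 3" "insert k T = S"
      proof -
        show "T \<subseteq> {1..r}" using S unfolding T_def by auto
        show "insert k T = S" using k unfolding T_def by auto
        have "card (S - {k}) = card S - 1" using fS k by (simp add: card_Diff_singleton)
        then show "1 \<le> card T" "card T \<le> 3" using S unfolding T_def by auto
      qed
      have kR: "k \<in> {1..r}" using S k by blast
      have "condU {k}" using L kR by blast
      moreover have "T \<noteq> {}" using T by auto
      ultimately have "if card T \<le> 3 then even (ZU {k} T + c T) else even (c T)"
        using T(1) unfolding condU_def by blast
      then have e1: "even (ZU {k} T + c T)" using T(3) by simp
      have kR': "{k} \<subseteq> {1..r}" using kR by blast
      have d1: "2 dvd (ZU {k} T - ((\<Sum>i=1..n. (\<Prod>j\<in>T. a i j) * b i) + (\<Sum>i=1..n. \<Prod>j\<in>S. a i j)))"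
      proof -
        have eqs: "(\<Sum>k'\<in>{k}. \<Sum>i=1..n. \<Prod>j\<in>insert k' T. a i j) = (\<Sum>i=1..n. \<Prod>j\<in>S. a i j)"
          using T(4) by simp
        show ?thesis using ZU_cong[OF kR' T(1)] by (simp only: eqs)
      qed
      have e2: "even ((\<Sum>i=1..n. (\<Prod>j\<in>T. a i j) * b i) + c T)" by (rule C0[OF T(1) T(2) T(3)])
      show "even (\<Sum>i=1..n. \<Prod>j\<in>S. a i j)" by (rule ar6[OF e1 d1 e2])
    qed
  qed
next
  assume R: "?A \<and> ?B \<and> ?C"
  have RA: "\<And>S. S \<subseteq> {1..r} \<Longrightarrow> 4 \<le> card S \<Longrightarrow> even (c S)" using R by blast
  have RB: "\<And>S. S \<subseteq> {1..r} \<Longrightarrow> 1 \<le> card S \<Longrightarrow> card S \<le> 4 \<Longrightarrow> even (\<Sum>i=1..n. \<Prod>j\<in>S. a i j)"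
    using R by blast
  have RC: "\<And>S. S \<subseteq> {1..r} \<Longrightarrow> 1 \<le> card S \<Longrightarrow> card S \<le> 3 \<Longrightarrow> (\<Sum>i=1..n. (\<Prod>j\<in>S. a i j) * b i) mod 2 = c S mod 2"
    using R by blast
  show ?L
  proof (intro allI impI)
    fix U assume U: "U \<subseteq> {1..r}"
    show "condU U" unfolding condU_def
    proof (intro allI impI)
      fix T assume T: "T \<subseteq> {1..r} \<and> T \<noteq> {}"
      then have fT: "finite T" using finite_subset by blast
      then have c1: "1 \<le> card T" using T by (simp add: Suc_le_eq card_gt_0_iff)
      show "if card T \<le> 3 then even (ZU U T + c T) else even (c T)"
      proof (cases "card T \<le> 3")
        case False
        have "even (c T)" by (rule RA) (use T False in auto)
        then show ?thesis using False by simp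
      next
        case True
        define x where "x = ZU U T"
        define y where "y = (\<Sum>i=1..n. (\<Prod>j\<in>T. a i j) * b i)"
        define z where "z = (\<Sum>k\<in>U. \<Sum>i=1..n. \<Prod>j\<in>insert k T. a i j)"
        have "2 dvd (x - (y + z))" unfolding x_def y_def z_def by (rule ZU_cong[OF U]) (use T in blast)
        moreover have "even (y + c T)" unfolding y_def dvd2_mod by (rule RC) (use T True c1 in auto)
        moreover have "even z" unfolding z_def
        proof (rule dvd_sum)
          fix k assume k: "k \<in> U"
          have "card (insert k T) \<le> card T + 1" using fT by (simp add: card_insert_le_m1 card_insert_if)
          moreover have "card (insert k T) \<ge> 1" using fT c1 by (simp add: card_insert_if)
          moreover have "insert k T \<subseteq> {1..r}" using k U T by blast
          ultimately show "even (\<Sum>i=1..n. \<Prod>j\<in>insert k T. a i j)" using True by (intro RB) auto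
        qed
        ultimately have "even (x + c T)" by (rule ar7)
        then show ?thesis using True unfolding x_def by simp
      qed
    qed
  qed
qed

end

lemma sq4: "4 dvd (bit (odd (u::int)) - u^2)"
proof (cases "even u")
  case True
  then obtain m where "u = 2 * m" by (auto elim: evenE)
  then show ?thesis by (simp add: bit_def power2_eq_square)
next
  case False
  then obtain m where m: "u = 2 * m + 1" by (auto elim: oddE)
  then have "bit (odd u) - u^2 = 4 * (- m * m - m)" by (simp add: bit_def power2_eq_square algebra_simps)
  then show ?thesis by simp
qed

lemma pp4: "4 dvd (2 * bit (odd (u1::int)) * bit (odd u2) - 2 * u1 * u2)"
proof -
  obtain t1 where t1: "bit (odd u1) - u1 = 2 * t1" using bit_odd_cong[of u1] by blast
  obtain t2 where t2: "bit (odd u2) - u2 = 2 * t2" using bit_odd_cong[of u2] by blast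
  have "2 * bit (odd u1) * bit (odd u2) - 2 * u1 * u2 = 2 * ((u1 + 2*t1) * (u2 + 2*t2)) - 2 * u1 * u2"
    using t1 t2 by (simp add: algebra_simps)
  also have "\<dots> = 4 * (t1 * u2 + u1 * t2 + 2 * t1 * t2)" by (simp add: algebra_simps)
  finally show ?thesis by simp
qed

lemma dvd_chain:
  fixes x y z m :: int
  assumes "m dvd (x - y)" "m dvd (y - z)"
  shows "m dvd (x - z)"
proof -
  have "x - z = (x - y) + (y - z)" by simp
  then show ?thesis using dvd_add[OF assms] by simp
qed

context th begin

definition Q4 :: "(nat set \<Rightarrow> int) \<Rightarrow> bool" where
  "Q4 F \<longleftrightarrow> (\<exists>c0 (l::nat\<Rightarrow>int) (q::nat\<Rightarrow>nat\<Rightarrow>int). \<forall>Y\<subseteq>{1..r}.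
      4 dvd (F Y - (c0 + (\<Sum>j=1..r. l j * bit (j \<in> Y))
                       + 2 * (\<Sum>j=1..r. \<Sum>k=1..r. q j k * bit (j \<in> Y) * bit (k \<in> Y)))))"

lemma Q4I:
  assumes "\<And>Y. Y \<subseteq> {1..r} \<Longrightarrow> F Y = c0 + (\<Sum>j=1..r. l j * bit (j \<in> Y))
                       + 2 * (\<Sum>j=1..r. \<Sum>k=1..r. q j k * bit (j \<in> Y) * bit (k \<in> Y))"
  shows "Q4 F"
  unfolding Q4_def using assms by (intro exI[of _ c0] exI[of _ l] exI[of _ q]) simp

lemma Q4_cong:
  assumes "\<And>Y. Y \<subseteq> {1..r} \<Longrightarrow> 4 dvd (F Y - G Y)" and "Q4 G"
  shows "Q4 F"
proof -
  obtain c0 l q where h: "\<forall>Y\<subseteq>{1..r}. 4 dvd (G Y - (c0 + (\<Sum>j=1..r. l j * bit (j \<in> Y))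
                       + 2 * (\<Sum>j=1..r. \<Sum>k=1..r. q j k * bit (j \<in> Y) * bit (k \<in> Y))))"
    using assms(2) unfolding Q4_def by blast
  show ?thesis unfolding Q4_def
  proof (intro exI allI impI)
    fix Y assume Y: "Y \<subseteq> {1..r}"
    show "4 dvd (F Y - (c0 + (\<Sum>j=1..r. l j * bit (j \<in> Y))
                       + 2 * (\<Sum>j=1..r. \<Sum>k=1..r. q j k * bit (j \<in> Y) * bit (k \<in> Y))))"
    proof (rule dvd_chain[of 4 _ "G Y"])
      show "4 dvd (F Y - G Y)" by (rule assms(1)[OF Y])
      show "4 dvd (G Y - (c0 + (\<Sum>j=1..r. l j * bit (j \<in> Y))
                       + 2 * (\<Sum>j=1..r. \<Sum>k=1..r. q j k * bit (j \<in> Y) * bit (k \<in> Y))))"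
        using h Y by blast
    qed
  qed
qed

lemma Q4_add:
  assumes "Q4 F" "Q4 G"
  shows "Q4 (\<lambda>Y. F Y + G Y)"
proof -
  obtain c1 l1 q1 where h1: "\<forall>Y\<subseteq>{1..r}. 4 dvd (F Y - (c1 + (\<Sum>j=1..r. l1 j * bit (j \<in> Y))
                       + 2 * (\<Sum>j=1..r. \<Sum>k=1..r. q1 j k * bit (j \<in> Y) * bit (k \<in> Y))))"
    using assms(1) unfolding Q4_def by blast
  obtain c2 l2 q2 where h2: "\<forall>Y\<subseteq>{1..r}. 4 dvd (G Y - (c2 + (\<Sum>j=1..r. l2 j * bit (j \<in> Y))
                       + 2 * (\<Sum>j=1..r. \<Sum>k=1..r. q2 j k * bit (j \<in> Y) * bit (k \<in> Y))))"
    using assms(2) unfolding Q4_def by blast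
  show ?thesis unfolding Q4_def
  proof (intro exI allI impI)
    fix Y assume Y: "Y \<subseteq> {1..r}"
    let ?A1 = "c1 + (\<Sum>j=1..r. l1 j * bit (j \<in> Y)) + 2 * (\<Sum>j=1..r. \<Sum>k=1..r. q1 j k * bit (j \<in> Y) * bit (k \<in> Y))"
    let ?A2 = "c2 + (\<Sum>j=1..r. l2 j * bit (j \<in> Y)) + 2 * (\<Sum>j=1..r. \<Sum>k=1..r. q2 j k * bit (j \<in> Y) * bit (k \<in> Y))"
    have e: "?A1 + ?A2 = (c1 + c2) + (\<Sum>j=1..r. (l1 j + l2 j) * bit (j \<in> Y))
          + 2 * (\<Sum>j=1..r. \<Sum>k=1..r. (q1 j k + q2 j k) * bit (j \<in> Y) * bit (k \<in> Y))"
      by (simp add: sum.distrib algebra_simps)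
    have "4 dvd ((F Y - ?A1) + (G Y - ?A2))" using h1 h2 Y by (intro dvd_add) auto
    then show "4 dvd (F Y + G Y - ((c1 + c2) + (\<Sum>j=1..r. (l1 j + l2 j) * bit (j \<in> Y))
          + 2 * (\<Sum>j=1..r. \<Sum>k=1..r. (q1 j k + q2 j k) * bit (j \<in> Y) * bit (k \<in> Y))))"
      unfolding e[symmetric] by (simp add: algebra_simps)
  qed
qed

lemma Q4_smult:
  assumes "Q4 F"
  shows "Q4 (\<lambda>Y. m * F Y)"
proof -
  obtain c1 l1 q1 where h1: "\<forall>Y\<subseteq>{1..r}. 4 dvd (F Y - (c1 + (\<Sum>j=1..r. l1 j * bit (j \<in> Y))
                       + 2 * (\<Sum>j=1..r. \<Sum>k=1..r. q1 j k * bit (j \<in> Y) * bit (k \<in> Y))))"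
    using assms(1) unfolding Q4_def by blast
  show ?thesis unfolding Q4_def
  proof (intro exI allI impI)
    fix Y assume Y: "Y \<subseteq> {1..r}"
    let ?A1 = "c1 + (\<Sum>j=1..r. l1 j * bit (j \<in> Y)) + 2 * (\<Sum>j=1..r. \<Sum>k=1..r. q1 j k * bit (j \<in> Y) * bit (k \<in> Y))"
    have e: "m * ?A1 = (m * c1) + (\<Sum>j=1..r. (m * l1 j) * bit (j \<in> Y))
          + 2 * (\<Sum>j=1..r. \<Sum>k=1..r. (m * q1 j k) * bit (j \<in> Y) * bit (k \<in> Y))"
      by (simp add: sum_distrib_left algebra_simps)
    have "4 dvd (m * (F Y - ?A1))" using h1 Y by (intro dvd_mult) auto
    then show "4 dvd (m * F Y - ((m * c1) + (\<Sum>j=1..r. (m * l1 j) * bit (j \<in> Y))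
          + 2 * (\<Sum>j=1..r. \<Sum>k=1..r. (m * q1 j k) * bit (j \<in> Y) * bit (k \<in> Y))))"
      unfolding e[symmetric] by (simp add: algebra_simps)
  qed
qed

lemma Q4_zero: "Q4 (\<lambda>Y. 0)"
  by (rule Q4I[of _ 0 "\<lambda>_. 0" "\<lambda>_ _. 0"]) simp

lemma Q4_sum:
  assumes "finite I" "\<And>i. i \<in> I \<Longrightarrow> Q4 (F i)"
  shows "Q4 (\<lambda>Y. \<Sum>i\<in>I. F i Y)"
  using assms
proof (induction I rule: finite_induct)
  case empty then show ?case using Q4_zero by simp
next
  case (insert x I)
  have "Q4 (\<lambda>Y. F x Y + (\<Sum>i\<in>I. F i Y))" using insert by (intro Q4_add) auto
  then show ?case using insert.hyps by simp
qed

lemma Q4_par: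
  "Q4 (\<lambda>Y. bit (odd ((\<Sum>j=1..r. al j * bit (j \<in> Y)) + be)))"
proof (rule Q4_cong)
  let ?L = "\<lambda>Y. (\<Sum>j=1..r. al j * bit (j \<in> Y))"
  fix Y assume Y: "Y \<subseteq> {1..r}"
  show "4 dvd (bit (odd (?L Y + be)) - (?L Y + be)^2)" by (rule sq4)
next
  let ?L = "\<lambda>Y. (\<Sum>j=1..r. al j * bit (j \<in> Y))"
  show "Q4 (\<lambda>Y. (?L Y + be)^2)"
  proof (rule Q4I[of _ "be^2" "\<lambda>j. al j * al j + 2 * be * al j" "\<lambda>j k. if j < k then al j * al k else 0"])
    fix Y assume Y: "Y \<subseteq> {1..r}"
    have bb: "bit P * bit P = bit P" for P by (simp add: bit_def)
    have "?L Y * ?L Y = (\<Sum>j=1..r. \<Sum>k=1..r. (al j * bit (j \<in> Y)) * (al k * bit (k \<in> Y)))"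
      by (simp add: sum_product)
    also have "\<dots> = (\<Sum>j=1..r. (al j * bit (j \<in> Y)) * (al j * bit (j \<in> Y)))
        + (\<Sum>j=1..r. \<Sum>k=1..r. if j < k then (al j * bit (j \<in> Y)) * (al k * bit (k \<in> Y)) + (al k * bit (k \<in> Y)) * (al j * bit (j \<in> Y)) else 0)"
      by (rule split_sq) simp
    also have "(\<Sum>j=1..r. (al j * bit (j \<in> Y)) * (al j * bit (j \<in> Y))) = (\<Sum>j=1..r. (al j * al j) * bit (j \<in> Y))"
    proof (rule sum.cong[OF refl])
      fix j
      have "(al j * bit (j \<in> Y)) * (al j * bit (j \<in> Y)) = (al j * al j) * (bit (j \<in> Y) * bit (j \<in> Y))"
        by (simp add: algebra_simps)
      then show "(al j * bit (j \<in> Y)) * (al j * bit (j \<in> Y)) = (al j * al j) * bit (j \<in> Y)" by (simp only: bb)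
    qed
    also have "(\<Sum>j=1..r. \<Sum>k=1..r. if j < k then (al j * bit (j \<in> Y)) * (al k * bit (k \<in> Y)) + (al k * bit (k \<in> Y)) * (al j * bit (j \<in> Y)) else 0)
        = 2 * (\<Sum>j=1..r. \<Sum>k=1..r. (if j < k then al j * al k else 0) * bit (j \<in> Y) * bit (k \<in> Y))"
      unfolding sum_distrib_left by (intro sum.cong refl) (simp add: algebra_simps)
    finally have sq: "?L Y * ?L Y = (\<Sum>j=1..r. (al j * al j) * bit (j \<in> Y)) + 2 * (\<Sum>j=1..r. \<Sum>k=1..r. (if j < k then al j * al k else 0) * bit (j \<in> Y) * bit (k \<in> Y))" .
    have "(?L Y + be)^2 = ?L Y * ?L Y + 2 * be * ?L Y + be^2" by (simp add: power2_eq_square algebra_simps)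
    also have "2 * be * ?L Y = (\<Sum>j=1..r. (2 * be * al j) * bit (j \<in> Y))" by (simp add: sum_distrib_left algebra_simps)
    finally show "(?L Y + be)^2 = be^2 + (\<Sum>j=1..r. (al j * al j + 2 * be * al j) * bit (j \<in> Y))
       + 2 * (\<Sum>j=1..r. \<Sum>k=1..r. (if j < k then al j * al k else 0) * bit (j \<in> Y) * bit (k \<in> Y))"
      unfolding sq by (simp add: sum.distrib algebra_simps)
  qed
qed

lemma Q4_par2:
  "Q4 (\<lambda>Y. 2 * bit (odd ((\<Sum>j=1..r. al j * bit (j \<in> Y)) + be)) * bit (odd ((\<Sum>j=1..r. ga j * bit (j \<in> Y)) + de)))"
proof (rule Q4_cong)
  let ?L = "\<lambda>Y. (\<Sum>j=1..r. al j * bit (j \<in> Y))"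
  let ?M = "\<lambda>Y. (\<Sum>j=1..r. ga j * bit (j \<in> Y))"
  fix Y assume Y: "Y \<subseteq> {1..r}"
  show "4 dvd (2 * bit (odd (?L Y + be)) * bit (odd (?M Y + de)) - 2 * (?L Y + be) * (?M Y + de))" by (rule pp4)
next
  let ?L = "\<lambda>Y. (\<Sum>j=1..r. al j * bit (j \<in> Y))"
  let ?M = "\<lambda>Y. (\<Sum>j=1..r. ga j * bit (j \<in> Y))"
  show "Q4 (\<lambda>Y. 2 * (?L Y + be) * (?M Y + de))"
  proof (rule Q4I[of _ "2 * be * de" "\<lambda>j. 2 * de * al j + 2 * be * ga j" "\<lambda>j k. al j * ga k"])
    fix Y assume Y: "Y \<subseteq> {1..r}"
    have pr: "?L Y * ?M Y = (\<Sum>j=1..r. \<Sum>k=1..r. al j * ga k * bit (j \<in> Y) * bit (k \<in> Y))"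
      by (simp add: sum_product algebra_simps)
    have "2 * (?L Y + be) * (?M Y + de) = 2 * be * de + (2 * de * ?L Y + 2 * be * ?M Y) + 2 * (?L Y * ?M Y)"
      by (simp add: algebra_simps)
    also have "2 * de * ?L Y + 2 * be * ?M Y = (\<Sum>j=1..r. (2 * de * al j + 2 * be * ga j) * bit (j \<in> Y))"
      by (simp add: sum_distrib_left sum.distrib algebra_simps)
    finally show "2 * (?L Y + be) * (?M Y + de) = 2 * be * de + (\<Sum>j=1..r. (2 * de * al j + 2 * be * ga j) * bit (j \<in> Y))
       + 2 * (\<Sum>j=1..r. \<Sum>k=1..r. al j * ga k * bit (j \<in> Y) * bit (k \<in> Y))"
      unfolding pr .
  qed
qed

end

context th begin

lemma K_form:
  assumes Y: "Y \<subseteq> {1..r}"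
  shows "(\<Sum>j\<in>{1..r}. (l j + 2 * q j j) * bit (phi Y j))
       + 2 * (\<Sum>j\<in>{1..r}. \<Sum>k\<in>{1..r}. if j < k then (q j k + q k j) * bit (phi Y j) * bit (phi Y k) else 0)
     = (\<Sum>j=1..r. l j * bit (j \<in> Y)) + 2 * (\<Sum>j=1..r. \<Sum>k=1..r. q j k * bit (j \<in> Y) * bit (k \<in> Y))"
proof -
  have bb: "bit P * bit P = bit P" for P by (simp add: bit_def)
  have s1: "(\<Sum>j\<in>{1..r}. (l j + 2 * q j j) * bit (phi Y j)) = (\<Sum>j=1..r. (l j + 2 * q j j) * bit (j \<in> Y))"
    using bit_phi_R[OF Y] by (intro sum.cong) auto
  have s2: "(\<Sum>j\<in>{1..r}. \<Sum>k\<in>{1..r}. if j < k then (q j k + q k j) * bit (phi Y j) * bit (phi Y k) else 0)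
      = (\<Sum>j=1..r. \<Sum>k=1..r. if j < k then (q j k + q k j) * bit (j \<in> Y) * bit (k \<in> Y) else 0)"
    using bit_phi_R[OF Y] by (intro sum.cong refl) auto
  have "(\<Sum>j=1..r. \<Sum>k=1..r. q j k * bit (j \<in> Y) * bit (k \<in> Y))
      = (\<Sum>j=1..r. q j j * bit (j \<in> Y) * bit (j \<in> Y))
        + (\<Sum>j=1..r. \<Sum>k=1..r. if j < k then q j k * bit (j \<in> Y) * bit (k \<in> Y) + q k j * bit (k \<in> Y) * bit (j \<in> Y) else 0)"
    by (rule split_sq) simp
  also have "(\<Sum>j=1..r. q j j * bit (j \<in> Y) * bit (j \<in> Y)) = (\<Sum>j=1..r. q j j * bit (j \<in> Y))"
    by (simp add: bb mult.assoc)
  also have "(\<Sum>j=1..r. \<Sum>k=1..r. if j < k then q j k * bit (j \<in> Y) * bit (k \<in> Y) + q k j * bit (k \<in> Y) * bit (j \<in> Y) else 0)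
      = (\<Sum>j=1..r. \<Sum>k=1..r. if j < k then (q j k + q k j) * bit (j \<in> Y) * bit (k \<in> Y) else 0)"
    by (intro sum.cong refl) (simp add: algebra_simps)
  finally have e: "(\<Sum>j=1..r. \<Sum>k=1..r. q j k * bit (j \<in> Y) * bit (k \<in> Y)) = (\<Sum>j=1..r. q j j * bit (j \<in> Y)) + (\<Sum>j=1..r. \<Sum>k=1..r. if j < k then (q j k + q k j) * bit (j \<in> Y) * bit (k \<in> Y) else 0)" .
  show ?thesis unfolding s1 s2 e by (simp add: sum.distrib algebra_simps sum_distrib_left)
qed

lemma KA1:
  assumes U: "U \<subseteq> {1..r}" and P: "P8 (EU U)"
  shows "in_A n (g U)"
proof -
  obtain c0 l q where h: "\<forall>Y\<subseteq>{1..r}. 8 dvd (EU U Y - (c0 + 2 * (\<Sum>j=1..r. l j * bit (j \<in> Y))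
                       + 4 * (\<Sum>j=1..r. \<Sum>k=1..r. q j k * bit (j \<in> Y) * bit (k \<in> Y))))"
    using P unfolding P8_def by blast
  define l' where "l' j = l j + 2 * q j j" for j
  define q' where "q' j k = q j k + q k j" for j k
  define \<mu> where "\<mu> = lam * alpha powi c0"
  have mu: "\<mu> \<noteq> 0" unfolding \<mu>_def using lam alpha_nz by simp
  have form: "\<forall>x\<in>supp n (g U). g U x = \<mu> * \<i> powi
             ((\<Sum>j\<in>{1..r}. l' j * bit (x j))
              + 2 * (\<Sum>j\<in>{1..r}. \<Sum>k\<in>{1..r}. if j < k then q' j k * bit (x j) * bit (x k) else 0))"
  proof
    fix x assume "x \<in> supp n (g U)"
    then have x: "x \<in> supp n f" using supp_g by simp
    define Y where "Y = {j\<in>{1..r}. x j}"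
    have Y: "Y \<subseteq> {1..r}" unfolding Y_def by blast
    have xY: "x = phi Y" unfolding Y_def by (rule supp_phi[OF x])
    define K where "K = (\<Sum>j\<in>{1..r}. l' j * bit (x j))
              + 2 * (\<Sum>j\<in>{1..r}. \<Sum>k\<in>{1..r}. if j < k then q' j k * bit (x j) * bit (x k) else 0)"
    have K: "K = (\<Sum>j=1..r. l j * bit (j \<in> Y)) + 2 * (\<Sum>j=1..r. \<Sum>k=1..r. q j k * bit (j \<in> Y) * bit (k \<in> Y))"
      unfolding K_def xY l'_def q'_def by (rule K_form[OF Y])
    have "8 dvd (EU U Y - (c0 + 2 * K))" using h Y unfolding K by (simp add: algebra_simps)
    then have "alpha powi (EU U Y) = alpha powi (c0 + 2 * K)" by (simp add: alpha_powi_eq)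
    also have "\<dots> = alpha powi c0 * \<i> powi K" using alpha_nz by (simp add: power_int_add i_powi)
    finally have "g U x = lam * (alpha powi c0 * \<i> powi K)" using g_phi[OF Y] xY by simp
    then show "g U x = \<mu> * \<i> powi K" unfolding \<mu>_def by (simp add: mult.assoc)
  qed
  show ?thesis unfolding in_A_def
  proof (rule disjI2, intro conjI)
    show "affine_sub n (supp n (g U))" using affine supp_g by simp
    show "\<exists>J. free_vars n (supp n (g U)) J \<and>
        (\<exists>\<mu>::complex. \<mu> \<noteq> 0 \<and> (\<exists>(l::nat \<Rightarrow> int) (q::nat \<Rightarrow> nat \<Rightarrow> int).
          \<forall>x \<in> supp n (g U). g U x = \<mu> * \<i> powi
             ((\<Sum>j\<in>J. l j * bit (x j))
              + 2 * (\<Sum>j\<in>J. \<Sum>k\<in>J. if j < k then q j k * bit (x j) * bit (x k) else 0))))"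
    proof (rule exI[of _ "{1..r}"], rule conjI)
      show "free_vars n (supp n (g U)) {1..r}" using freev supp_g by simp
      show "\<exists>\<mu>::complex. \<mu> \<noteq> 0 \<and> (\<exists>(l::nat \<Rightarrow> int) (q::nat \<Rightarrow> nat \<Rightarrow> int).
          \<forall>x \<in> supp n (g U). g U x = \<mu> * \<i> powi
             ((\<Sum>j\<in>{1..r}. l j * bit (x j))
              + 2 * (\<Sum>j\<in>{1..r}. \<Sum>k\<in>{1..r}. if j < k then q j k * bit (x j) * bit (x k) else 0)))"
        using mu form by blast
    qed
  qed
qed

end

lemma ar8:
  fixes e d k d0 c1 L Q :: int
  shows "e = d + 2 * k \<Longrightarrow> 8 dvd (d - d0) \<Longrightarrow> 4 dvd (k - (c1 + L + 2 * Q)) \<Longrightarrow>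
    8 dvd (e - ((d0 + 2 * c1) + 2 * L + 4 * Q))"
  by presburger

lemma cancel_nz:
  fixes x y A :: complex
  shows "x * A = y * A \<Longrightarrow> A \<noteq> 0 \<Longrightarrow> x = y" by simp

context th begin

lemma KA2:
  assumes U: "U \<subseteq> {1..r}" and A: "in_A n (g U)"
  shows "P8 (EU U)"
proof -
  have ne: "supp n (g U) \<noteq> {}" using phi_supp[of "{}"] supp_g by auto
  then obtain J \<mu> l q where fv: "free_vars n (supp n (g U)) J" and mu: "\<mu> \<noteq> 0"
    and form: "\<forall>x \<in> supp n (g U). g U x = \<mu> * \<i> powi
             ((\<Sum>j\<in>J. l j * bit (x j))
              + 2 * (\<Sum>j\<in>J. \<Sum>k\<in>J. if j < k then q j k * bit (x j) * bit (x k) else 0))"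
    using A unfolding in_A_def by blast
  have JN: "J \<subseteq> {1..n}" using fv unfolding free_vars_def by blast
  have fJ: "finite J" using JN finite_subset by blast
  define K where "K x = (\<Sum>j\<in>J. l j * bit (x j))
              + 2 * (\<Sum>j\<in>J. \<Sum>k\<in>J. if j < k then q j k * bit (x j) * bit (x k) else 0)" for x
  define D where "D Y = EU U Y - 2 * K (phi Y)" for Y
  have DY: "lam * alpha powi (D Y) = \<mu>" if Y: "Y \<subseteq> {1..r}" for Y
  proof -
    have "phi Y \<in> supp n (g U)" using phi_supp[OF Y] supp_g by simp
    then have "g U (phi Y) = \<mu> * \<i> powi K (phi Y)" using form unfolding K_def by blast
    then have "lam * alpha powi (EU U Y) = \<mu> * alpha powi (2 * K (phi Y))"
      using g_phi[OF Y] by (simp add: i_powi)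
    moreover have "alpha powi (EU U Y) = alpha powi (D Y) * alpha powi (2 * K (phi Y))"
      unfolding D_def using alpha_nz by (simp add: power_int_add[symmetric])
    ultimately have "(lam * alpha powi (D Y)) * alpha powi (2 * K (phi Y)) = \<mu> * alpha powi (2 * K (phi Y))"
      by (simp add: mult.assoc)
    then show ?thesis by (rule cancel_nz) (simp add: alpha_nz)
  qed
  have D8: "8 dvd (D Y - D {})" if Y: "Y \<subseteq> {1..r}" for Y
  proof -
    have "lam * alpha powi (D Y) = lam * alpha powi (D {})" using DY[OF Y] DY[of "{}"] by simp
    then have "alpha powi (D Y) = alpha powi (D {})" using lam by simp
    then show ?thesis by (simp add: alpha_powi_eq)
  qed
  define P where "P j Y = bit (odd ((\<Sum>i=1..r. a j i * bit (i \<in> Y)) + b j))" for j Y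
  have Pphi: "bit (phi Y j) = P j Y" if "j \<in> J" for j Y
    using that JN unfolding P_def phi_def by auto
  have KE: "K (phi Y) = (\<Sum>j\<in>J. l j * P j Y) + (\<Sum>j\<in>J. \<Sum>k\<in>J. (if j < k then q j k else 0) * (2 * P j Y * P k Y))" for Y
  proof -
    have "(\<Sum>j\<in>J. l j * bit (phi Y j)) = (\<Sum>j\<in>J. l j * P j Y)" using Pphi by (intro sum.cong) auto
    moreover have "2 * (\<Sum>j\<in>J. \<Sum>k\<in>J. if j < k then q j k * bit (phi Y j) * bit (phi Y k) else 0)
        = (\<Sum>j\<in>J. \<Sum>k\<in>J. (if j < k then q j k else 0) * (2 * P j Y * P k Y))"
      unfolding sum_distrib_left using Pphi by (intro sum.cong refl) auto
    ultimately show ?thesis unfolding K_def by simp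
  qed
  have "Q4 (\<lambda>Y. (\<Sum>j\<in>J. l j * P j Y) + (\<Sum>j\<in>J. \<Sum>k\<in>J. (if j < k then q j k else 0) * (2 * P j Y * P k Y)))"
  proof (rule Q4_add)
    have QP: "Q4 (\<lambda>Y. P j Y)" for j unfolding P_def by (rule Q4_par)
    have QP2: "Q4 (\<lambda>Y. 2 * P j Y * P k Y)" for j k unfolding P_def by (rule Q4_par2)
    show "Q4 (\<lambda>Y. \<Sum>j\<in>J. l j * P j Y)"
      using fJ QP by (intro Q4_sum Q4_smult) auto
    show "Q4 (\<lambda>Y. \<Sum>j\<in>J. \<Sum>k\<in>J. (if j < k then q j k else 0) * (2 * P j Y * P k Y))"
      using fJ QP2 by (intro Q4_sum Q4_smult) auto
  qed
  then have "Q4 (\<lambda>Y. K (phi Y))" unfolding KE .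
  then obtain c1 l1 q1 where h1: "\<forall>Y\<subseteq>{1..r}. 4 dvd (K (phi Y) - (c1 + (\<Sum>j=1..r. l1 j * bit (j \<in> Y))
                       + 2 * (\<Sum>j=1..r. \<Sum>k=1..r. q1 j k * bit (j \<in> Y) * bit (k \<in> Y))))"
    unfolding Q4_def by blast
  show ?thesis unfolding P8_def
  proof (intro exI allI impI)
    fix Y assume Y: "Y \<subseteq> {1..r}"
    have e: "EU U Y = D Y + 2 * K (phi Y)" unfolding D_def by simp
    show "8 dvd (EU U Y - ((D {} + 2 * c1) + 2 * (\<Sum>j=1..r. l1 j * bit (j \<in> Y))
                       + 4 * (\<Sum>j=1..r. \<Sum>k=1..r. q1 j k * bit (j \<in> Y) * bit (k \<in> Y))))"
      by (rule ar8[OF e D8[OF Y]]) (use h1 Y in blast)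
  qed
qed

end

context th begin

lemma inL_iff: "in_L n f \<longleftrightarrow> (\<forall>U. U \<subseteq> {1..r} \<longrightarrow> in_A n (g U))"
proof
  assume L: "in_L n f"
  show "\<forall>U. U \<subseteq> {1..r} \<longrightarrow> in_A n (g U)"
  proof (intro allI impI)
    fix U assume U: "U \<subseteq> {1..r}"
    have "phi U \<in> supp n f" by (rule phi_supp[OF U])
    then have "in_A n (\<lambda>x. alpha powi (\<Sum>i=1..n. bit (phi U i) * bit (x i)) * f x)"
      using L unfolding in_L_def by blast
    then show "in_A n (g U)" unfolding g_def .
  qed
next
  assume R: "\<forall>U. U \<subseteq> {1..r} \<longrightarrow> in_A n (g U)"
  show "in_L n f" unfolding in_L_def
  proof
    fix \<sigma> assume s: "\<sigma> \<in> supp n f"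
    define U where "U = {j\<in>{1..r}. \<sigma> j}"
    have U: "U \<subseteq> {1..r}" unfolding U_def by blast
    have sU: "\<sigma> = phi U" unfolding U_def by (rule supp_phi[OF s])
    have "in_A n (g U)" using R U by blast
    then show "in_A n (\<lambda>x. alpha powi (\<Sum>i=1..n. bit (\<sigma> i) * bit (x i)) * f x)"
      unfolding g_def sU .
  qed
qed

lemma cond_iff:
  assumes U: "U \<subseteq> {1..r}"
  shows "(\<forall>T. T \<subseteq> {1..r} \<and> T \<noteq> {} \<longrightarrow> md (card T) dvd eU U T) \<longleftrightarrow> condU U"
proof -
  have h: "md (card T) dvd eU U T \<longleftrightarrow> (if card T \<le> 3 then even (ZU U T + c T) else even (c T))"
    if "T \<subseteq> {1..r}" "T \<noteq> {}" for T
    unfolding ZU_def by (rule e_cond[OF that])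
  show ?thesis unfolding condU_def
  proof (intro iffI allI impI)
    fix T assume H: "\<forall>T. T \<subseteq> {1..r} \<and> T \<noteq> {} \<longrightarrow> md (card T) dvd eU U T"
      and T: "T \<subseteq> {1..r} \<and> T \<noteq> {}"
    have "md (card T) dvd eU U T" using H T by blast
    then show "if card T \<le> 3 then even (ZU U T + c T) else even (c T)" using h T by blast
  next
    fix T assume H: "\<forall>T. T \<subseteq> {1..r} \<and> T \<noteq> {} \<longrightarrow> (if card T \<le> 3 then even (ZU U T + c T) else even (c T))"
      and T: "T \<subseteq> {1..r} \<and> T \<noteq> {}"
    have "if card T \<le> 3 then even (ZU U T + c T) else even (c T)" using H T by blast
    then show "md (card T) dvd eU U T" using h T by blast
  qed
qed

lemma main:
  "in_L n f \<longleftrightarrow>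
           (\<forall>S. S \<subseteq> {1..r} \<and> 4 \<le> card S \<longrightarrow> even (c S))
         \<and> (\<forall>S. S \<subseteq> {1..r} \<and> 1 \<le> card S \<and> card S \<le> 4 \<longrightarrow>
               even (\<Sum>i=1..n. \<Prod>j\<in>S. a i j))
         \<and> (\<forall>S. S \<subseteq> {1..r} \<and> 1 \<le> card S \<and> card S \<le> 3 \<longrightarrow>
               (\<Sum>i=1..n. (\<Prod>j\<in>S. a i j) * b i) mod 2 = c S mod 2)"
proof -
  have "in_L n f \<longleftrightarrow> (\<forall>U. U \<subseteq> {1..r} \<longrightarrow> in_A n (g U))" by (rule inL_iff)
  also have "\<dots> \<longleftrightarrow> (\<forall>U. U \<subseteq> {1..r} \<longrightarrow> P8 (EU U))"
  proof (intro iffI allI impI)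
    fix U assume "\<forall>U. U \<subseteq> {1..r} \<longrightarrow> in_A n (g U)" "U \<subseteq> {1..r}"
    then show "P8 (EU U)" using KA2 by blast
  next
    fix U assume "\<forall>U. U \<subseteq> {1..r} \<longrightarrow> P8 (EU U)" "U \<subseteq> {1..r}"
    then show "in_A n (g U)" using KA1 by blast
  qed
  also have "\<dots> \<longleftrightarrow> (\<forall>U. U \<subseteq> {1..r} \<longrightarrow> condU U)"
  proof (intro iffI allI impI)
    fix U assume "\<forall>U. U \<subseteq> {1..r} \<longrightarrow> P8 (EU U)" and U: "U \<subseteq> {1..r}"
    then have "P8 (EU U)" by blast
    then show "condU U" using KB[OF U] cond_iff[OF U] by blast
  next
    fix U assume "\<forall>U. U \<subseteq> {1..r} \<longrightarrow> condU U" and U: "U \<subseteq> {1..r}"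
    then have "condU U" by blast
    then show "P8 (EU U)" using KB[OF U] cond_iff[OF U] by blast
  qed
  also have "\<dots> \<longleftrightarrow> (\<forall>S. S \<subseteq> {1..r} \<and> 4 \<le> card S \<longrightarrow> even (c S))
         \<and> (\<forall>S. S \<subseteq> {1..r} \<and> 1 \<le> card S \<and> card S \<le> 4 \<longrightarrow>
               even (\<Sum>i=1..n. \<Prod>j\<in>S. a i j))
         \<and> (\<forall>S. S \<subseteq> {1..r} \<and> 1 \<le> card S \<and> card S \<le> 3 \<longrightarrow>
               (\<Sum>i=1..n. (\<Prod>j\<in>S. a i j) * b i) mod 2 = c S mod 2)" by (rule KC)
  finally show ?thesis .
qed

end

theorem theorem3p4:
  fixes n r :: nat
    and f :: "(nat \<Rightarrow> bool) \<Rightarrow> complex"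
    and a :: "nat \<Rightarrow> nat \<Rightarrow> int" and b :: "nat \<Rightarrow> int"
    and c :: "nat set \<Rightarrow> int"
    and lam :: complex
  assumes rn: "r \<le> n"
    and a01: "\<forall>i\<in>{1..n}. \<forall>j\<in>{1..r}. a i j \<in> {0, 1}"
    and b01: "\<forall>i\<in>{1..n}. b i \<in> {0, 1}"
    and aI: "\<forall>i\<in>{1..r}. \<forall>j\<in>{1..r}. a i j = (if i = j then 1 else 0)"
    and b0: "\<forall>i\<in>{1..r}. b i = 0"
    and supp_f: "supp n f = {x \<in> cube n. \<forall>i\<in>{1..n}.
                    x i = odd ((\<Sum>j=1..r. a i j * bit (x j)) + b i)}"
    and lam: "lam \<noteq> 0"
    and f_form: "\<forall>x \<in> cube n. f x =
        (if x \<in> supp n f then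
           lam * alpha powi
             ((\<Sum>j=1..r. c {j} * bit (x j))
              + 2 * (\<Sum>j=1..r. \<Sum>k=1..r. if j < k then c {j, k} * bit (x j) * bit (x k) else 0)
              + 4 * (\<Sum>S \<in> {S. S \<subseteq> {1..r} \<and> 3 \<le> card S}. c S * (\<Prod>j\<in>S. bit (x j))))
         else 0)"
  shows "in_L n f \<longleftrightarrow>
           (\<forall>S. S \<subseteq> {1..r} \<and> 4 \<le> card S \<longrightarrow> even (c S))
         \<and> (\<forall>S. S \<subseteq> {1..r} \<and> 1 \<le> card S \<and> card S \<le> 4 \<longrightarrow>
               even (\<Sum>i=1..n. \<Prod>j\<in>S. a i j))
         \<and> (\<forall>S. S \<subseteq> {1..r} \<and> 1 \<le> card S \<and> card S \<le> 3 \<longrightarrow>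
               (\<Sum>i=1..n. (\<Prod>j\<in>S. a i j) * b i) mod 2 = c S mod 2)"
proof -
  have "th n r f a b c lam"
    unfolding th_def using rn a01 b01 aI b0 supp_f lam f_form by (intro conjI)
  then show ?thesis by (rule th.main)
qed


end
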